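(* Consider the single-queue bandit described in the context, with problem instance $(\lambda,\boldsymbol{\mu})$, $\boldsymbol\mu=(\mu_1,\dots,\mu_K)$. For every $\alpha\in(0,1)$ and every $\alpha$-consistent scheduling policy, the queue-regret satisfies $$\Psi(t)\ \ge\ \left(\frac{\lambda}{4}\,D(\boldsymbol{\mu})\,(1-\alpha)\,(K-1)\right)\frac{1}{t}$$ for infinitely many $t$, where $$D(\boldsymbol{\mu})=\frac{\Delta}{\mathrm{KL}\left(\mu_{\min},\frac{\mu^*+1}{2}\right)}.$$
   Context: Discrete-time queueing system with one queue and $K\ge 2$ servers indexed by $[K]=\{1,\dots,K\}$. Arrivals $A(t)\in\{0,1\}$ are i.i.d. Bernoulli($\lambda$) over time slots $t=1,2,\dots$; the service $R_k(t)\in\{0,1\}$ offered by server $k$ at time $t$ is Bernoulli($\mu_k$), independent across $k$, across $t$ and of the arrivals. Let $\mu^*=\max_k\mu_k$, attained at a unique server $k^*$, and assume $\lambda<\mu^*$. A scheduling policy chooses at each time $t$ a server $\kappa(t)\in[K]$ based only on past observations (the servers scheduled and the services they provided, and arrivals, up to time $t-1$) and possibly independent internal randomization; the service parameters are unknown to it. With $S(t)=R_{\kappa(t)}(t)$, the queue evolves as $Q(t)=(Q(t-1)+A(t)-S(t))^+$. The genie queue $Q^*(t)$ uses the same arrivals and always schedules $k^*$: $Q^*(t)=(Q^*(t-1)+A(t)-R_{k^*}(t))^+$. Both $Q(0)$ and $Q^*(0)$ are distributed according to the stationary distribution $\pi_{(\lambda,\mu^* )}$ of $Q^*$. The queue-regret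 is $\Psi(t)=\mathbb{E}[Q(t)-Q^*(t)]$. Notation: $\Delta=\mu^*-\max_{k\ne k^*}\mu_k$, $\mu_{\min}=\min_k\mu_k$, and $\mathrm{KL}(p,q)=p\log\frac pq+(1-p)\log\frac{1-p}{1-q}$ is the Bernoulli Kullback–Leibler divergence. A policy is $\alpha$-consistent ($\alpha\in(0,1)$) if for every problem instance $(\lambda,\boldsymbol\mu)$ of this type, $\mathbb{E}\left[\sum_{s=1}^t \mathbf 1\{\kappa(s)=k\}\right]=O(t^\alpha)$ as $t\to\infty$ for every $k\ne k^*$. *)

theory Defs
  imports "HOL-Probability.Probability" "HOL-Library.Landau_Symbols"
begin

(* Servers are indexed by {1..K}; a service-rate vector is mu :: nat => real. *)

type_synonym hist = "(nat \<times> bool \<times> bool) list"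
  (* entry for slot s: (kappa(s), A(s), S(s)) = (server scheduled, arrival, service obtained) *)

(* A (behavioural) scheduling policy: given the observation history up to time t-1,
   a distribution over the server scheduled at time t. *)
type_synonym policy = "hist \<Rightarrow> nat pmf"

definition valid_policy :: "nat \<Rightarrow> policy \<Rightarrow> bool" where
  "valid_policy K pol \<longleftrightarrow> (\<forall>h. set_pmf (pol h) \<subseteq> {1..K})"

definition is_best :: "nat \<Rightarrow> (nat \<Rightarrow> real) \<Rightarrow> nat \<Rightarrow> bool" where
  "is_best K mu k \<longleftrightarrow> k \<in> {1..K} \<and> (\<forall>j\<in>{1..K}. j \<noteq> k \<longrightarrow> mu j < mu k)"

definition best :: "nat \<Rightarrow> (nat \<Rightarrow> real) \<Rightarrow> nat" where
  "best K mu = (THE k. is_best K mu k)"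

definition qb_instance :: "nat \<Rightarrow> real \<Rightarrow> (nat \<Rightarrow> real) \<Rightarrow> bool" where
  "qb_instance K lam mu \<longleftrightarrow> 0 \<le> lam \<and> (\<forall>k\<in>{1..K}. 0 \<le> mu k \<and> mu k \<le> 1)
     \<and> (\<exists>k. is_best K mu k) \<and> lam < mu (best K mu)"

definition mu_star :: "nat \<Rightarrow> (nat \<Rightarrow> real) \<Rightarrow> real" where
  "mu_star K mu = mu (best K mu)"

definition gap :: "nat \<Rightarrow> (nat \<Rightarrow> real) \<Rightarrow> real" where
  "gap K mu = mu_star K mu - Max (mu ` ({1..K} - {best K mu}))"

definition mu_min :: "nat \<Rightarrow> (nat \<Rightarrow> real) \<Rightarrow> real" where
  "mu_min K mu = Min (mu ` {1..K})"

(* Bernoulli KL divergence, with the convention 0 log 0 = 0 (automatic in Isabelle since 0 * _ = 0) *)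
definition bern_KL :: "real \<Rightarrow> real \<Rightarrow> real" where
  "bern_KL p q = p * ln (p / q) + (1 - p) * ln ((1 - p) / (1 - q))"

(* D(mu) = Delta / KL(mu_min, (mu^*+1)/2); when (mu^*+1)/2 = 1 the KL divergence is
   +infinity (mu_min < 1 there) and D = 0. *)
definition D_mu :: "nat \<Rightarrow> (nat \<Rightarrow> real) \<Rightarrow> real" where
  "D_mu K mu = (let q = (mu_star K mu + 1) / 2 in
     if q = 1 then 0 else gap K mu / bern_KL (mu_min K mu) q)"

definition queue_step :: "real \<Rightarrow> real \<Rightarrow> nat \<Rightarrow> nat pmf" where
  "queue_step lam m q =
     map_pmf (\<lambda>(a, r). nat (int q + of_bool a - of_bool r))
       (pair_pmf (bernoulli_pmf lam) (bernoulli_pmf m))"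

definition stat_dist :: "real \<Rightarrow> real \<Rightarrow> nat pmf" where
  "stat_dist lam m = (THE p. bind_pmf p (queue_step lam m) = p)"

(* one slot of the coupled system: state = (history, Q, Q^* ) *)
definition sys_step :: "nat \<Rightarrow> real \<Rightarrow> (nat \<Rightarrow> real) \<Rightarrow> policy
     \<Rightarrow> hist \<times> nat \<times> nat \<Rightarrow> (hist \<times> nat \<times> nat) pmf" where
  "sys_step K lam mu pol st =
     (case st of (h, q, qs) \<Rightarrow>
       bind_pmf (bernoulli_pmf lam) (\<lambda>a.
       bind_pmf (Pi_pmf {1..K} False (\<lambda>k. bernoulli_pmf (mu k))) (\<lambda>R.
       bind_pmf (pol h) (\<lambda>\<kappa>.
         return_pmf (h @ [(\<kappa>, a, R \<kappa>)],
                     nat (int q + of_bool a - of_bool (R \<kappa>)),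
                     nat (int qs + of_bool a - of_bool (R (best K mu))))))))"

primrec sys :: "nat \<Rightarrow> real \<Rightarrow> (nat \<Rightarrow> real) \<Rightarrow> policy \<Rightarrow> nat \<Rightarrow> (hist \<times> nat \<times> nat) pmf" where
  "sys K lam mu pol 0 = map_pmf (\<lambda>q. ([], q, q)) (stat_dist lam (mu_star K mu))"
| "sys K lam mu pol (Suc t) = bind_pmf (sys K lam mu pol t) (sys_step K lam mu pol)"

definition queue_regret :: "nat \<Rightarrow> real \<Rightarrow> (nat \<Rightarrow> real) \<Rightarrow> policy \<Rightarrow> nat \<Rightarrow> real" where
  "queue_regret K lam mu pol t =
     measure_pmf.expectation (sys K lam mu pol t) (\<lambda>(h, q, qs). real q - real qs)"

definition exp_pulls :: "nat \<Rightarrow> real \<Rightarrow> (nat \<Rightarrow> real) \<Rightarrow> policy \<Rightarrow> nat \<Rightarrow> nat \<Rightarrow> real" where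
  "exp_pulls K lam mu pol k t =
     measure_pmf.expectation (sys K lam mu pol t)
       (\<lambda>(h, q, qs). real (length (filter (\<lambda>e. fst e = k) h)))"

definition alpha_consistent :: "nat \<Rightarrow> real \<Rightarrow> policy \<Rightarrow> bool" where
  "alpha_consistent K \<alpha> pol \<longleftrightarrow>
     (\<forall>lam mu. qb_instance K lam mu \<longrightarrow>
        (\<forall>k\<in>{1..K}. k \<noteq> best K mu \<longrightarrow>
           (\<lambda>t. exp_pulls K lam mu pol k t) \<in> O(\<lambda>t. real t powr \<alpha>)))"

end

theory Submission
  imports Defs "HOL-Real_Asymp.Real_Asymp"
begin

lemma exp_bind_bounded:
  fixes f :: "'b \<Rightarrow> real"
  assumes "\<And>x y. x \<in> set_pmf M \<Longrightarrow> y \<in> set_pmf (N x) \<Longrightarrow> \<bar>f y\<bar> \<le> B"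
  shows "measure_pmf.expectation (bind_pmf M N) f =
         measure_pmf.expectation M (\<lambda>x. measure_pmf.expectation (N x) f)"
proof -
  define g where "g y = max (-B) (min B (f y))" for y
  have gb: "\<bar>g y\<bar> \<le> \<bar>B\<bar>" for y unfolding g_def by auto
  have 1: "measure_pmf.expectation (bind_pmf M N) f = measure_pmf.expectation (bind_pmf M N) g"
  proof (intro integral_cong_AE)
    show "AE y in measure_pmf (bind_pmf M N). f y = g y"
      unfolding AE_measure_pmf_iff
    proof
      fix y assume "y \<in> set_pmf (bind_pmf M N)"
      then obtain x where "x \<in> set_pmf M" "y \<in> set_pmf (N x)" by auto
      from assms[OF this] show "f y = g y" unfolding g_def by auto
    qed
  qed auto
  have 2: "measure_pmf.expectation M (\<lambda>x. measure_pmf.expectation (N x) f) =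
           measure_pmf.expectation M (\<lambda>x. measure_pmf.expectation (N x) g)"
  proof (intro integral_cong_AE)
    show "AE x in measure_pmf M. measure_pmf.expectation (N x) f = measure_pmf.expectation (N x) g"
      unfolding AE_measure_pmf_iff
    proof
      fix x assume x: "x \<in> set_pmf M"
      show "measure_pmf.expectation (N x) f = measure_pmf.expectation (N x) g"
        by (intro integral_cong_AE) (auto simp: AE_measure_pmf_iff g_def dest: assms[OF x])
    qed
  qed auto
  have 3: "measure_pmf.expectation (bind_pmf M N) g = measure_pmf.expectation M (\<lambda>x. measure_pmf.expectation (N x) g)"
    unfolding measure_pmf_bind
    by (rule integral_bind[where K="count_space UNIV" and B="\<bar>B\<bar>" and B'=1])
       (auto simp: gb measure_pmf_in_subprob_space measure_pmf.finite_measure_axioms measure_pmf.emeasure_space_1)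
  show ?thesis using 1 2 3 by simp
qed


lemma is_best_unique: "is_best K mu k \<Longrightarrow> is_best K mu k' \<Longrightarrow> k = k'"
  unfolding is_best_def by (metis less_asym)

lemma best_is_best: "is_best K mu k \<Longrightarrow> best K mu = k"
  unfolding best_def using is_best_unique by blast

lemma nat_aux1[simp]: "nat (int q + 1) = Suc q" by arith
lemma nat_aux3[simp]: "nat (1 + int q) = Suc q" by arith
lemma nat_aux2[simp]: "nat (int q - 1) = q - 1" by arith

locale QB =
  fixes K :: nat and lam :: real and mu :: "nat \<Rightarrow> real" and pol :: policy
  assumes inst: "qb_instance K lam mu" and vp: "valid_policy K pol"
begin

abbreviation "ks \<equiv> best K mu"

lemma ks_best: "is_best K mu ks"
  using inst unfolding qb_instance_def using best_is_best by metis

lemma ks_in: "ks \<in> {1..K}" using ks_best unfolding is_best_def by auto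

lemma mu_lt: "j \<in> {1..K} \<Longrightarrow> j \<noteq> ks \<Longrightarrow> mu j < mu ks"
  using ks_best unfolding is_best_def by auto

lemma mu_le: "j \<in> {1..K} \<Longrightarrow> mu j \<le> mu ks"
  using mu_lt[of j] by (cases "j = ks") force+

lemma mu01: "j \<in> {1..K} \<Longrightarrow> 0 \<le> mu j \<and> mu j \<le> 1"
  using inst unfolding qb_instance_def by auto

lemma lam_ge: "0 \<le> lam" and lam_lt: "lam < mu ks"
  using inst unfolding qb_instance_def by auto

lemma lam_le1: "lam \<le> 1" using lam_lt mu01[OF ks_in] by auto

lemma pol_set: "set_pmf (pol h) \<subseteq> {1..K}"
  using vp unfolding valid_policy_def by auto

lemma pol_in: "\<kappa> \<in> set_pmf (pol h) \<Longrightarrow> \<kappa> \<in> {1..K}"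
  using pol_set by blast

lemma pol_fin: "finite (set_pmf (pol h))"
  using pol_set finite_subset by blast

abbreviation "PiR \<equiv> Pi_pmf {1..K} False (\<lambda>k. bernoulli_pmf (mu k))"

lemma PiR_comp: "k \<in> {1..K} \<Longrightarrow> map_pmf (\<lambda>R. R k) PiR = bernoulli_pmf (mu k)"
  by (simp add: Pi_pmf_component)

lemma exp_PiR: "k \<in> {1..K} \<Longrightarrow> measure_pmf.expectation PiR (\<lambda>R. g (R k)) =
   g True * mu k + g False * (1 - mu k)"
proof -
  assume k: "k \<in> {1..K}"
  have "measure_pmf.expectation PiR (\<lambda>R. g (R k)) = measure_pmf.expectation (map_pmf (\<lambda>R. R k) PiR) g"
    by (simp only: integral_map_pmf)
  also have "\<dots> = measure_pmf.expectation (bernoulli_pmf (mu k)) g"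
    using k by (simp only: PiR_comp)
  also have "\<dots> = g True * mu k + g False * (1 - mu k)"
    using mu01[OF k] by simp
  finally show ?thesis .
qed

definition F :: "hist \<Rightarrow> nat \<Rightarrow> nat \<Rightarrow> nat \<Rightarrow> bool \<Rightarrow> (nat \<Rightarrow> bool) \<Rightarrow> hist \<times> nat \<times> nat" where
  "F h q qs \<kappa> a R = (h @ [(\<kappa>, a, R \<kappa>)], nat (int q + of_bool a - of_bool (R \<kappa>)),
                     nat (int qs + of_bool a - of_bool (R ks)))"

lemma sys_step_eq: "sys_step K lam mu pol (h, q, qs) =
  bind_pmf (bernoulli_pmf lam) (\<lambda>a. bind_pmf PiR (\<lambda>R. bind_pmf (pol h) (\<lambda>\<kappa>. return_pmf (F h q qs \<kappa> a R))))"
  unfolding sys_step_def F_def by simp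

lemma step_exp:
  fixes f :: "hist \<times> nat \<times> nat \<Rightarrow> real"
  assumes bnd: "\<And>y. y \<in> set_pmf (sys_step K lam mu pol (h, q, qs)) \<Longrightarrow> \<bar>f y\<bar> \<le> B"
  shows "measure_pmf.expectation (sys_step K lam mu pol (h, q, qs)) f =
    (\<Sum>\<kappa>\<in>set_pmf (pol h). pmf (pol h) \<kappa> *
       (lam * measure_pmf.expectation PiR (\<lambda>R. f (F h q qs \<kappa> True R)) +
        (1 - lam) * measure_pmf.expectation PiR (\<lambda>R. f (F h q qs \<kappa> False R))))"
proof -
  let ?S = "sys_step K lam mu pol (h, q, qs)"
  have b2: "\<bar>f (F h q qs \<kappa> a R)\<bar> \<le> B" if "a \<in> set_pmf (bernoulli_pmf lam)" "R \<in> set_pmf PiR"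
       "\<kappa> \<in> set_pmf (pol h)" for a R \<kappa>
    using that by (intro bnd) (auto simp: sys_step_eq)
  have inner: "measure_pmf.expectation PiR (\<lambda>R. measure_pmf.expectation (bind_pmf (pol h) (\<lambda>\<kappa>. return_pmf (F h q qs \<kappa> a R))) f)
     = (\<Sum>\<kappa>\<in>set_pmf (pol h). pmf (pol h) \<kappa> * measure_pmf.expectation PiR (\<lambda>R. f (F h q qs \<kappa> a R)))"
    if a: "a \<in> set_pmf (bernoulli_pmf lam)" for a
  proof -
    have "measure_pmf.expectation PiR (\<lambda>R. measure_pmf.expectation (bind_pmf (pol h) (\<lambda>\<kappa>. return_pmf (F h q qs \<kappa> a R))) f)
      = measure_pmf.expectation PiR (\<lambda>R. \<Sum>\<kappa>\<in>set_pmf (pol h). pmf (pol h) \<kappa> * f (F h q qs \<kappa> a R))"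
    proof (rule Bochner_Integration.integral_cong[OF refl])
      fix R
      have "measure_pmf.expectation (bind_pmf (pol h) (\<lambda>\<kappa>. return_pmf (F h q qs \<kappa> a R))) f
          = measure_pmf.expectation (pol h) (\<lambda>\<kappa>. f (F h q qs \<kappa> a R))"
        by (simp add: bind_return_pmf' map_pmf_def[symmetric])
      also have "\<dots> = (\<Sum>\<kappa>\<in>set_pmf (pol h). f (F h q qs \<kappa> a R) * pmf (pol h) \<kappa>)"
        by (rule integral_measure_pmf_real) (auto simp: pol_fin)
      finally show "measure_pmf.expectation (bind_pmf (pol h) (\<lambda>\<kappa>. return_pmf (F h q qs \<kappa> a R))) f
        = (\<Sum>\<kappa>\<in>set_pmf (pol h). pmf (pol h) \<kappa> * f (F h q qs \<kappa> a R))" by (simp add: mult.commute)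
    qed
    also have "\<dots> = (\<Sum>\<kappa>\<in>set_pmf (pol h). measure_pmf.expectation PiR (\<lambda>R. pmf (pol h) \<kappa> * f (F h q qs \<kappa> a R)))"
    proof (rule Bochner_Integration.integral_sum)
      fix \<kappa> assume k: "\<kappa> \<in> set_pmf (pol h)"
      show "integrable (measure_pmf PiR) (\<lambda>R. pmf (pol h) \<kappa> * f (F h q qs \<kappa> a R))"
        by (intro integrable_mult_right measure_pmf.integrable_const_bound[where B=B])
           (auto simp: AE_measure_pmf_iff intro!: b2[OF a _ k])
    qed
    also have "\<dots> = (\<Sum>\<kappa>\<in>set_pmf (pol h). pmf (pol h) \<kappa> * measure_pmf.expectation PiR (\<lambda>R. f (F h q qs \<kappa> a R)))"
      by simp
    finally show ?thesis .
  qed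
  have "measure_pmf.expectation ?S f = measure_pmf.expectation (bernoulli_pmf lam)
      (\<lambda>a. measure_pmf.expectation (bind_pmf PiR (\<lambda>R. bind_pmf (pol h) (\<lambda>\<kappa>. return_pmf (F h q qs \<kappa> a R)))) f)"
    unfolding sys_step_eq by (rule exp_bind_bounded[where B=B]) (auto simp del: One_nat_def intro: b2)
  also have "\<dots> = measure_pmf.expectation (bernoulli_pmf lam)
      (\<lambda>a. measure_pmf.expectation PiR (\<lambda>R. measure_pmf.expectation (bind_pmf (pol h) (\<lambda>\<kappa>. return_pmf (F h q qs \<kappa> a R))) f))"
  proof (intro integral_cong_AE)
    show "AE a in measure_pmf (bernoulli_pmf lam). measure_pmf.expectation (bind_pmf PiR (\<lambda>R. bind_pmf (pol h) (\<lambda>\<kappa>. return_pmf (F h q qs \<kappa> a R)))) f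
       = measure_pmf.expectation PiR (\<lambda>R. measure_pmf.expectation (bind_pmf (pol h) (\<lambda>\<kappa>. return_pmf (F h q qs \<kappa> a R))) f)"
      unfolding AE_measure_pmf_iff
      by (intro ballI exp_bind_bounded[where B=B]) (auto simp del: One_nat_def intro: b2)
  qed auto
  also have "\<dots> = measure_pmf.expectation (bernoulli_pmf lam)
      (\<lambda>a. \<Sum>\<kappa>\<in>set_pmf (pol h). pmf (pol h) \<kappa> * measure_pmf.expectation PiR (\<lambda>R. f (F h q qs \<kappa> a R)))"
    by (intro integral_cong_AE) (auto simp: AE_measure_pmf_iff inner simp del: One_nat_def)
  also have "\<dots> = (\<Sum>\<kappa>\<in>set_pmf (pol h). pmf (pol h) \<kappa> *
       (lam * measure_pmf.expectation PiR (\<lambda>R. f (F h q qs \<kappa> True R)) +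
        (1 - lam) * measure_pmf.expectation PiR (\<lambda>R. f (F h q qs \<kappa> False R))))"
    using lam_ge lam_le1 by (simp add: sum_distrib_left sum.distrib[symmetric] sum_subtractf[symmetric] algebra_simps)
  finally show ?thesis .
qed

lemma step_supp:
  assumes "y \<in> set_pmf (sys_step K lam mu pol (h, q, qs))"
  shows "fst (snd y) \<le> q + 1 \<and> snd (snd y) \<le> qs + 1 \<and>
     (\<exists>\<kappa> a s. \<kappa> \<in> set_pmf (pol h) \<and> fst y = h @ [(\<kappa>, a, s)]) \<and>
     \<bar>int (fst (snd y)) - int (snd (snd y))\<bar> \<le> \<bar>int q - int qs\<bar> + 1"
  using assms unfolding sys_step_eq F_def by (auto split: if_splits)

lemma step_exp_q:
  "measure_pmf.expectation (sys_step K lam mu pol (h, q, qs)) (\<lambda>y. g (fst (snd y))) =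
    (\<Sum>\<kappa>\<in>set_pmf (pol h). pmf (pol h) \<kappa> *
       (lam * (mu \<kappa> * g q + (1 - mu \<kappa>) * g (q + 1)) +
        (1 - lam) * (mu \<kappa> * g (q - 1) + (1 - mu \<kappa>) * g q)))" (is "_ = ?thesis_rhs")
proof -
  have "measure_pmf.expectation (sys_step K lam mu pol (h, q, qs)) (\<lambda>y. g (fst (snd y))) =
    (\<Sum>\<kappa>\<in>set_pmf (pol h). pmf (pol h) \<kappa> *
       (lam * measure_pmf.expectation PiR (\<lambda>R. g (fst (snd (F h q qs \<kappa> True R)))) +
        (1 - lam) * measure_pmf.expectation PiR (\<lambda>R. g (fst (snd (F h q qs \<kappa> False R))))))"
    by (rule step_exp[where B="\<bar>g (q - 1)\<bar> + \<bar>g q\<bar> + \<bar>g (q + 1)\<bar>"])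
       (auto simp: sys_step_eq F_def nat_diff_distrib)
  also have "\<dots> = ?thesis_rhs"
  proof (rule sum.cong[OF refl])
    fix \<kappa> assume k: "\<kappa> \<in> set_pmf (pol h)"
    hence k': "\<kappa> \<in> {1..K}" by (rule pol_in)
    have e: "measure_pmf.expectation PiR (\<lambda>R. g (fst (snd (F h q qs \<kappa> a R)))) =
       g (nat (int q + of_bool a - 1)) * mu \<kappa> + g (nat (int q + of_bool a)) * (1 - mu \<kappa>)" for a
      using exp_PiR[OF k', of "\<lambda>b. g (nat (int q + of_bool a - of_bool b))"] unfolding F_def by simp
    show "pmf (pol h) \<kappa> *
       (lam * measure_pmf.expectation PiR (\<lambda>R. g (fst (snd (F h q qs \<kappa> True R)))) +
        (1 - lam) * measure_pmf.expectation PiR (\<lambda>R. g (fst (snd (F h q qs \<kappa> False R))))) =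
      pmf (pol h) \<kappa> *
       (lam * (mu \<kappa> * g q + (1 - mu \<kappa>) * g (q + 1)) +
        (1 - lam) * (mu \<kappa> * g (q - 1) + (1 - mu \<kappa>) * g q))"
      unfolding e by (simp add: algebra_simps)
  qed
  finally show ?thesis .
qed
lemma pol_sum1: "(\<Sum>\<kappa>\<in>set_pmf (pol h). pmf (pol h) \<kappa>) = 1"
  by (rule sum_pmf_eq_1) (auto simp: pol_fin)

lemma step_exp_qs:
  "measure_pmf.expectation (sys_step K lam mu pol (h, q, qs)) (\<lambda>y. g (snd (snd y))) =
       lam * (mu ks * g qs + (1 - mu ks) * g (qs + 1)) +
        (1 - lam) * (mu ks * g (qs - 1) + (1 - mu ks) * g qs)" (is "_ = ?r")
proof -
  have "measure_pmf.expectation (sys_step K lam mu pol (h, q, qs)) (\<lambda>y. g (snd (snd y))) =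
    (\<Sum>\<kappa>\<in>set_pmf (pol h). pmf (pol h) \<kappa> *
       (lam * measure_pmf.expectation PiR (\<lambda>R. g (snd (snd (F h q qs \<kappa> True R)))) +
        (1 - lam) * measure_pmf.expectation PiR (\<lambda>R. g (snd (snd (F h q qs \<kappa> False R))))))"
    by (rule step_exp[where B="\<bar>g (qs - 1)\<bar> + \<bar>g qs\<bar> + \<bar>g (qs + 1)\<bar>"])
       (auto simp: sys_step_eq F_def nat_diff_distrib)
  also have "\<dots> = (\<Sum>\<kappa>\<in>set_pmf (pol h). pmf (pol h) \<kappa> * ?r)"
  proof (rule sum.cong[OF refl])
    fix \<kappa> assume k: "\<kappa> \<in> set_pmf (pol h)"
    have e: "measure_pmf.expectation PiR (\<lambda>R. g (snd (snd (F h q qs \<kappa> a R)))) =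
       g (nat (int qs + of_bool a - 1)) * mu ks + g (nat (int qs + of_bool a)) * (1 - mu ks)" for a
      using exp_PiR[OF ks_in, of "\<lambda>b. g (nat (int qs + of_bool a - of_bool b))"] unfolding F_def by simp
    show "pmf (pol h) \<kappa> *
       (lam * measure_pmf.expectation PiR (\<lambda>R. g (snd (snd (F h q qs \<kappa> True R)))) +
        (1 - lam) * measure_pmf.expectation PiR (\<lambda>R. g (snd (snd (F h q qs \<kappa> False R))))) =
      pmf (pol h) \<kappa> * ?r"
      unfolding e by (simp add: algebra_simps)
  qed
  also have "\<dots> = ?r" by (simp add: sum_distrib_right[symmetric] pol_sum1)
  finally show ?thesis .
qed

lemma step_exp_h:
  "measure_pmf.expectation (sys_step K lam mu pol (h, q, qs)) (\<lambda>y. g (fst y)) =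
    (\<Sum>\<kappa>\<in>set_pmf (pol h). pmf (pol h) \<kappa> *
       (lam * (mu \<kappa> * g (h @ [(\<kappa>, True, True)]) + (1 - mu \<kappa>) * g (h @ [(\<kappa>, True, False)])) +
        (1 - lam) * (mu \<kappa> * g (h @ [(\<kappa>, False, True)]) + (1 - mu \<kappa>) * g (h @ [(\<kappa>, False, False)]))))"
    (is "_ = ?thesis_rhs")
proof -
  let ?B = "\<Sum>\<kappa>\<in>set_pmf (pol h). \<Sum>a\<in>UNIV. \<Sum>s\<in>UNIV. \<bar>g (h @ [(\<kappa>, a, s)])\<bar>"
  have bnd: "\<bar>g (h @ [(\<kappa>, a, s)])\<bar> \<le> ?B" if "\<kappa> \<in> set_pmf (pol h)" for \<kappa> a s
  proof -
    have "\<bar>g (h @ [(\<kappa>, a, s)])\<bar> \<le> (\<Sum>s\<in>UNIV. \<bar>g (h @ [(\<kappa>, a, s)])\<bar>)"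
      by (rule member_le_sum) auto
    also have "\<dots> \<le> (\<Sum>a\<in>UNIV. \<Sum>s\<in>UNIV. \<bar>g (h @ [(\<kappa>, a, s)])\<bar>)"
      by (rule member_le_sum[where f="\<lambda>a. \<Sum>s\<in>UNIV. \<bar>g (h @ [(\<kappa>, a, s)])\<bar>"])
         (auto intro: sum_nonneg)
    also have "\<dots> \<le> ?B"
      by (rule member_le_sum[where f="\<lambda>\<kappa>. \<Sum>a\<in>UNIV. \<Sum>s\<in>UNIV. \<bar>g (h @ [(\<kappa>, a, s)])\<bar>"])
         (auto intro: sum_nonneg that pol_fin)
    finally show ?thesis .
  qed
  have "measure_pmf.expectation (sys_step K lam mu pol (h, q, qs)) (\<lambda>y. g (fst y)) =
    (\<Sum>\<kappa>\<in>set_pmf (pol h). pmf (pol h) \<kappa> *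
       (lam * measure_pmf.expectation PiR (\<lambda>R. g (fst (F h q qs \<kappa> True R))) +
        (1 - lam) * measure_pmf.expectation PiR (\<lambda>R. g (fst (F h q qs \<kappa> False R)))))"
    by (rule step_exp[where B="?B"])
       (auto simp: sys_step_eq F_def simp del: One_nat_def intro!: bnd)
  also have "\<dots> = ?thesis_rhs"
  proof (rule sum.cong[OF refl])
    fix \<kappa> assume k: "\<kappa> \<in> set_pmf (pol h)"
    hence k': "\<kappa> \<in> {1..K}" by (rule pol_in)
    have e: "measure_pmf.expectation PiR (\<lambda>R. g (fst (F h q qs \<kappa> a R))) =
       g (h @ [(\<kappa>, a, True)]) * mu \<kappa> + g (h @ [(\<kappa>, a, False)]) * (1 - mu \<kappa>)" for a
      using exp_PiR[OF k', of "\<lambda>b. g (h @ [(\<kappa>, a, b)])"] unfolding F_def by simp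
    show "pmf (pol h) \<kappa> *
       (lam * measure_pmf.expectation PiR (\<lambda>R. g (fst (F h q qs \<kappa> True R))) +
        (1 - lam) * measure_pmf.expectation PiR (\<lambda>R. g (fst (F h q qs \<kappa> False R)))) =
      pmf (pol h) \<kappa> *
       (lam * (mu \<kappa> * g (h @ [(\<kappa>, True, True)]) + (1 - mu \<kappa>) * g (h @ [(\<kappa>, True, False)])) +
        (1 - lam) * (mu \<kappa> * g (h @ [(\<kappa>, False, True)]) + (1 - mu \<kappa>) * g (h @ [(\<kappa>, False, False)])))"
      unfolding e by (simp add: algebra_simps)
  qed
  finally show ?thesis .
qed

end

lemma integrable_supp_bnd:
  fixes f :: "'a \<Rightarrow> real"
  assumes "\<And>x. x \<in> set_pmf M \<Longrightarrow> \<bar>f x\<bar> \<le> B"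
  shows "integrable (measure_pmf M) f"
  by (rule measure_pmf.integrable_const_bound[where B=B]) (auto simp: AE_measure_pmf_iff assms)

definition cnt :: "nat \<Rightarrow> hist \<Rightarrow> real" where
  "cnt k h = real (length (filter (\<lambda>e. fst e = k) h))"

context QB begin

abbreviation "S t \<equiv> sys K lam mu pol t"

lemma sys_supp:
  "st \<in> set_pmf (S t) \<Longrightarrow> length (fst st) = t \<and> (\<forall>e\<in>set (fst st). fst e \<in> {1..K}) \<and>
     \<bar>int (fst (snd st)) - int (snd (snd st))\<bar> \<le> int t"
proof (induction t arbitrary: st)
  case 0
  then show ?case by auto
next
  case (Suc t)
  then obtain st0 where st0: "st0 \<in> set_pmf (S t)" "st \<in> set_pmf (sys_step K lam mu pol st0)"
    by auto
  obtain h q qs where st0e: "st0 = (h, q, qs)" by (cases st0) auto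
  have IH: "length h = t" "\<forall>e\<in>set h. fst e \<in> {1..K}" "\<bar>int q - int qs\<bar> \<le> int t"
    using Suc.IH[OF st0(1)] st0e by auto
  from step_supp[of st h q qs] st0 st0e obtain \<kappa> a s where
    "\<kappa> \<in> set_pmf (pol h)" "fst st = h @ [(\<kappa>, a, s)]"
    "\<bar>int (fst (snd st)) - int (snd (snd st))\<bar> \<le> \<bar>int q - int qs\<bar> + 1" by blast
  then show ?case using IH pol_in by auto
qed

lemma sys_exp_Suc:
  fixes f :: "hist \<times> nat \<times> nat \<Rightarrow> real"
  assumes "\<And>st. st \<in> set_pmf (S (Suc t)) \<Longrightarrow> \<bar>f st\<bar> \<le> B"
  shows "measure_pmf.expectation (S (Suc t)) f =
    measure_pmf.expectation (S t) (\<lambda>st. measure_pmf.expectation (sys_step K lam mu pol st) f)"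
  unfolding sys.simps by (rule exp_bind_bounded[where B=B]) (auto intro!: assms)

definition pk :: "nat \<Rightarrow> nat \<Rightarrow> real" where
  "pk k t = measure_pmf.expectation (S t) (\<lambda>st. pmf (pol (fst st)) k)"


lemma exp_pulls_eq: "exp_pulls K lam mu pol k t = measure_pmf.expectation (S t) (\<lambda>st. cnt k (fst st))"
  unfolding exp_pulls_def cnt_def by (simp add: case_prod_unfold)

lemma cnt_le: "0 \<le> cnt k h" "cnt k h \<le> length h"
  unfolding cnt_def by (auto intro: order.trans[OF length_filter_le])

lemma cnt_bnd: "st \<in> set_pmf (S t) \<Longrightarrow> \<bar>cnt k (fst st)\<bar> \<le> t"
  using sys_supp[of st t] cnt_le[of k "fst st"] by auto

lemma pol_sum_ind: "(\<Sum>\<kappa>\<in>set_pmf (pol h). pmf (pol h) \<kappa> * (c + of_bool (\<kappa> = k))) = c + pmf (pol h) k"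
proof -
  have "(\<Sum>\<kappa>\<in>set_pmf (pol h). pmf (pol h) \<kappa> * (c + of_bool (\<kappa> = k))) =
     c * (\<Sum>\<kappa>\<in>set_pmf (pol h). pmf (pol h) \<kappa>) + (\<Sum>\<kappa>\<in>set_pmf (pol h). pmf (pol h) \<kappa> * of_bool (\<kappa> = k))"
    by (simp add: algebra_simps sum.distrib sum_distrib_left)
  also have "(\<Sum>\<kappa>\<in>set_pmf (pol h). pmf (pol h) \<kappa> * of_bool (\<kappa> = k)) = pmf (pol h) k"
    using pol_fin[of h] by (cases "k \<in> set_pmf (pol h)") (auto simp: set_pmf_iff)
  finally show ?thesis by (simp add: pol_sum1)
qed

lemma pulls_Suc: "exp_pulls K lam mu pol k (Suc t) = exp_pulls K lam mu pol k t + pk k t"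
proof -
  have "exp_pulls K lam mu pol k (Suc t) =
     measure_pmf.expectation (S t) (\<lambda>st. measure_pmf.expectation (sys_step K lam mu pol st) (\<lambda>y. cnt k (fst y)))"
    unfolding exp_pulls_eq
    by (rule sys_exp_Suc[where B="Suc t"]) (rule cnt_bnd)
  also have "\<dots> = measure_pmf.expectation (S t) (\<lambda>st. cnt k (fst st) + pmf (pol (fst st)) k)"
  proof (rule Bochner_Integration.integral_cong[OF refl])
    fix st :: "hist \<times> nat \<times> nat"
    obtain h q qs where st: "st = (h, q, qs)" by (cases st) auto
    have c: "cnt k (h @ [(\<kappa>, a, s)]) = cnt k h + of_bool (\<kappa> = k)" for \<kappa> a s
      by (simp add: cnt_def)
    show "measure_pmf.expectation (sys_step K lam mu pol st) (\<lambda>y. cnt k (fst y)) = cnt k (fst st) + pmf (pol (fst st)) k"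
      unfolding st step_exp_h c by (simp add: algebra_simps pol_sum_ind[of h "cnt k h" k, simplified algebra_simps])
  qed
  also have "\<dots> = exp_pulls K lam mu pol k t + pk k t"
    unfolding exp_pulls_eq pk_def
  proof (rule Bochner_Integration.integral_add)
    show "integrable (measure_pmf (S t)) (\<lambda>st. cnt k (fst st))"
      by (rule integrable_supp_bnd[where B=t]) (rule cnt_bnd)
    show "integrable (measure_pmf (S t)) (\<lambda>st. pmf (pol (fst st)) k)"
      by (rule integrable_supp_bnd[where B=1]) (simp add: pmf_le_1)
  qed
  finally show ?thesis .
qed

lemma pulls_sum: "exp_pulls K lam mu pol k t = (\<Sum>s<t. pk k s)"
  by (induction t) (auto simp: pulls_Suc, simp add: exp_pulls_eq cnt_def)

end

lemma exp_lin3: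
  fixes f1 f2 f3 :: "'a \<Rightarrow> real"
  assumes "integrable (measure_pmf M) f1" "integrable (measure_pmf M) f2" "integrable (measure_pmf M) f3"
  shows "measure_pmf.expectation M (\<lambda>x. c1 * f1 x + c2 * f2 x + c3 * f3 x) =
    c1 * measure_pmf.expectation M f1 + c2 * measure_pmf.expectation M f2 + c3 * measure_pmf.expectation M f3"
  using assms by (simp add: Bochner_Integration.integral_add)

lemma ind_integrable: "integrable (measure_pmf M) (\<lambda>x. of_bool (P x) :: real)"
  by (rule measure_pmf.integrable_const_bound[where B=1]) auto

context QB begin

definition Pq :: "nat \<Rightarrow> nat \<Rightarrow> real" where
  "Pq t n = measure_pmf.expectation (S t) (\<lambda>st. of_bool (n \<le> fst (snd st)))"
definition Pqs :: "nat \<Rightarrow> nat \<Rightarrow> real" where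
  "Pqs t n = measure_pmf.expectation (S t) (\<lambda>st. of_bool (n \<le> snd (snd st)))"

definition ee :: "nat \<Rightarrow> real \<Rightarrow> nat \<Rightarrow> real" where
  "ee n m x = lam * (m * of_bool (n \<le> x) + (1 - m) * of_bool (n \<le> x + 1)) +
              (1 - lam) * (m * of_bool (n \<le> x - 1) + (1 - m) * of_bool (n \<le> x))"

lemma ee_anti: "m \<le> m' \<Longrightarrow> ee n m' x \<le> ee n m x"
proof -
  assume mm: "m \<le> m'"
  have d: "ee n m x - ee n m' x = (m' - m) * (lam * (of_bool (n \<le> x + 1) - of_bool (n \<le> x)) +
      (1 - lam) * (of_bool (n \<le> x) - of_bool (n \<le> x - 1)))"
    unfolding ee_def by (simp add: algebra_simps)
  have "0 \<le> lam * (of_bool (n \<le> x + 1) - of_bool (n \<le> x)) + (1 - lam) * (of_bool (n \<le> x) - of_bool (n \<le> x - 1))"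
    using lam_ge lam_le1 by (intro add_nonneg_nonneg mult_nonneg_nonneg) auto
  with mm have "0 \<le> ee n m x - ee n m' x" unfolding d by simp
  thus ?thesis by simp
qed

lemma ee_bnd: "0 \<le> m \<Longrightarrow> m \<le> 1 \<Longrightarrow> \<bar>ee n m x\<bar> \<le> 1"
proof -
  assume m: "0 \<le> m" "m \<le> 1"
  have "0 \<le> ee n m x" unfolding ee_def using m lam_ge lam_le1
    by (intro add_nonneg_nonneg mult_nonneg_nonneg) auto
  moreover have "ee n m x \<le> lam * (m + (1 - m)) + (1 - lam) * (m + (1 - m))" unfolding ee_def using m lam_ge lam_le1
    by (intro add_mono mult_left_mono) (auto intro: mult_left_le)
  ultimately show ?thesis by simp
qed

lemma Pq_Suc: "Pq (Suc t) n = measure_pmf.expectation (S t)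
   (\<lambda>st. \<Sum>\<kappa>\<in>set_pmf (pol (fst st)). pmf (pol (fst st)) \<kappa> * ee n (mu \<kappa>) (fst (snd st)))"
  unfolding Pq_def
  apply (subst sys_exp_Suc[where B=1])
   apply simp
  apply (rule Bochner_Integration.integral_cong[OF refl])
  subgoal for st
    using step_exp_q[of "fst st" "fst (snd st)" "snd (snd st)" "\<lambda>x. of_bool (n \<le> x)"]
    by (simp add: ee_def)
  done

lemma Pqs_Suc: "Pqs (Suc t) n = measure_pmf.expectation (S t) (\<lambda>st. ee n (mu ks) (snd (snd st)))"
  unfolding Pqs_def
  apply (subst sys_exp_Suc[where B=1])
   apply simp
  apply (rule Bochner_Integration.integral_cong[OF refl])
  subgoal for st
    using step_exp_qs[of "fst st" "fst (snd st)" "snd (snd st)" "\<lambda>x. of_bool (n \<le> x)"]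
    by (simp add: ee_def)
  done

lemma ee_pos: "1 \<le> n \<Longrightarrow> ee n m x = lam * (1 - m) * of_bool (n - 1 \<le> x) +
     (lam * m + (1 - lam) * (1 - m)) * of_bool (n \<le> x) + (1 - lam) * m * of_bool (n + 1 \<le> x)"
proof -
  assume n: "1 \<le> n"
  have 1: "(n \<le> x + 1) = (n - 1 \<le> x)" using n by arith
  have 2: "(n \<le> x - 1) = (n + 1 \<le> x)" using n by arith
  show ?thesis unfolding ee_def 1 2 by (simp add: algebra_simps)
qed

lemma ee_zero: "ee 0 m x = 1" unfolding ee_def by (simp add: algebra_simps)

lemma dominance: "Pqs t n \<le> Pq t n"
proof (induction t arbitrary: n)
  case 0
  show ?case unfolding Pq_def Pqs_def by simp
next
  case (Suc t)
  let ?ms = "mu ks"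
  have "Pqs (Suc t) n = measure_pmf.expectation (S t) (\<lambda>st. ee n ?ms (snd (snd st)))"
    by (rule Pqs_Suc)
  also have "\<dots> \<le> measure_pmf.expectation (S t) (\<lambda>st. ee n ?ms (fst (snd st)))"
  proof (cases "n = 0")
    case True
    then show ?thesis by (simp add: ee_zero)
  next
    case False
    hence n: "1 \<le> n" by simp
    let ?c1 = "lam * (1 - ?ms)" and ?c2 = "lam * ?ms + (1 - lam) * (1 - ?ms)" and ?c3 = "(1 - lam) * ?ms"
    have c: "0 \<le> ?c1" "0 \<le> ?c2" "0 \<le> ?c3" using lam_ge lam_le1 mu01[OF ks_in] by auto
    have "measure_pmf.expectation (S t) (\<lambda>st. ee n ?ms (snd (snd st))) =
        ?c1 * Pqs t (n - 1) + ?c2 * Pqs t n + ?c3 * Pqs t (n + 1)"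
      unfolding ee_pos[OF n] Pqs_def by (rule exp_lin3) (auto intro: ind_integrable)
    also have "\<dots> \<le> ?c1 * Pq t (n - 1) + ?c2 * Pq t n + ?c3 * Pq t (n + 1)"
      using c Suc.IH by (intro add_mono mult_left_mono) auto
    also have "\<dots> = measure_pmf.expectation (S t) (\<lambda>st. ee n ?ms (fst (snd st)))"
      unfolding ee_pos[OF n] Pq_def by (rule exp_lin3[symmetric]) (auto intro: ind_integrable)
    finally show ?thesis .
  qed
  also have "\<dots> \<le> measure_pmf.expectation (S t)
      (\<lambda>st. \<Sum>\<kappa>\<in>set_pmf (pol (fst st)). pmf (pol (fst st)) \<kappa> * ee n (mu \<kappa>) (fst (snd st)))"
  proof (rule integral_mono)
    show "integrable (measure_pmf (S t)) (\<lambda>st. ee n ?ms (fst (snd st)))"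
      by (rule integrable_supp_bnd[where B=1]) (rule ee_bnd, use mu01[OF ks_in] in auto)
    show "integrable (measure_pmf (S t))
      (\<lambda>st. \<Sum>\<kappa>\<in>set_pmf (pol (fst st)). pmf (pol (fst st)) \<kappa> * ee n (mu \<kappa>) (fst (snd st)))"
    proof (rule integrable_supp_bnd[where B=1])
      fix st :: "hist \<times> nat \<times> nat"
      have "\<bar>\<Sum>\<kappa>\<in>set_pmf (pol (fst st)). pmf (pol (fst st)) \<kappa> * ee n (mu \<kappa>) (fst (snd st))\<bar>
         \<le> (\<Sum>\<kappa>\<in>set_pmf (pol (fst st)). \<bar>pmf (pol (fst st)) \<kappa> * ee n (mu \<kappa>) (fst (snd st))\<bar>)"
        by (rule sum_abs)
      also have "\<dots> \<le> (\<Sum>\<kappa>\<in>set_pmf (pol (fst st)). pmf (pol (fst st)) \<kappa> * 1)"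
      proof (intro sum_mono)
        fix \<kappa> assume "\<kappa> \<in> set_pmf (pol (fst st))"
        hence "\<kappa> \<in> {1..K}" by (rule pol_in)
        hence "\<bar>ee n (mu \<kappa>) (fst (snd st))\<bar> \<le> 1" using mu01 ee_bnd by blast
        thus "\<bar>pmf (pol (fst st)) \<kappa> * ee n (mu \<kappa>) (fst (snd st))\<bar> \<le> pmf (pol (fst st)) \<kappa> * 1"
          by (simp add: abs_mult mult_left_le)
      qed
      also have "\<dots> = 1" by (simp add: pol_sum1)
      finally show "\<bar>\<Sum>\<kappa>\<in>set_pmf (pol (fst st)). pmf (pol (fst st)) \<kappa> * ee n (mu \<kappa>) (fst (snd st))\<bar> \<le> 1" .
    qed
    fix st :: "hist \<times> nat \<times> nat"
    have "ee n ?ms (fst (snd st)) = (\<Sum>\<kappa>\<in>set_pmf (pol (fst st)). pmf (pol (fst st)) \<kappa> * ee n ?ms (fst (snd st)))"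
      by (simp add: sum_distrib_right[symmetric] pol_sum1)
    also have "\<dots> \<le> (\<Sum>\<kappa>\<in>set_pmf (pol (fst st)). pmf (pol (fst st)) \<kappa> * ee n (mu \<kappa>) (fst (snd st)))"
      by (intro sum_mono mult_left_mono ee_anti mu_le) (auto dest: pol_in)
    finally show "ee n ?ms (fst (snd st)) \<le> (\<Sum>\<kappa>\<in>set_pmf (pol (fst st)). pmf (pol (fst st)) \<kappa> * ee n (mu \<kappa>) (fst (snd st)))" .
  qed
  also have "\<dots> = Pq (Suc t) n" by (rule Pq_Suc[symmetric])
  finally show ?case .
qed

end

lemma min_sum: "real (min q N) = (\<Sum>n\<in>{1..N}. of_bool (n \<le> q))"
  by (induction N) (auto simp: min_def)

lemma tail_to_0: "(\<lambda>N. measure_pmf.prob M {x. N < g x}) \<longlonglongrightarrow> 0"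
proof -
  have "(\<lambda>N. measure_pmf.prob M {x. N < g x}) \<longlonglongrightarrow> measure_pmf.prob M (\<Inter>N. {x. N < g x})"
    by (rule measure_pmf.finite_Lim_measure_decseq) (auto simp: decseq_def)
  moreover have "(\<Inter>N. {x. N < g x}) = {}" by auto
  ultimately show ?thesis by simp
qed

context QB begin

lemma key_nonneg:
  assumes c: "0 \<le> c" "c \<le> 1"
  shows "0 \<le> measure_pmf.expectation (S t)
     (\<lambda>st. real (fst (snd st)) - real (snd (snd st)) +
           c * (of_bool (fst (snd st) = 0) - of_bool (snd (snd st) = 0)))" (is "0 \<le> ?EX")
proof -
  let ?X = "\<lambda>st. real (fst (snd st)) - real (snd (snd st)) +
           c * (of_bool (fst (snd st) = 0) - of_bool (snd (snd st) = 0))"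
  let ?P = "\<lambda>N. measure_pmf.prob (S t) {st. N < snd (snd st)}"
  have bound: "0 \<le> ?EX + real t * ?P N" if N: "1 \<le> N" for N
  proof -
    let ?Y = "\<lambda>st. (\<Sum>n\<in>{1..N}. of_bool (n \<le> fst (snd st)) - of_bool (n \<le> snd (snd st))) +
         c * (of_bool (1 \<le> snd (snd st)) - of_bool (1 \<le> fst (snd st)))"
    have intY: "integrable (measure_pmf (S t)) ?Y"
      by (intro Bochner_Integration.integrable_add integrable_mult_right Bochner_Integration.integrable_diff
           Bochner_Integration.integrable_sum ind_integrable)
    have EY: "measure_pmf.expectation (S t) ?Y = (\<Sum>n\<in>{1..N}. Pq t n - Pqs t n) + c * (Pqs t 1 - Pq t 1)"
      unfolding Pq_def Pqs_def
      by (simp add: Bochner_Integration.integral_add Bochner_Integration.integral_diff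
            Bochner_Integration.integral_sum ind_integrable Bochner_Integration.integrable_sum
            Bochner_Integration.integrable_diff)
    have d: "0 \<le> Pq t n - Pqs t n" for n using dominance[of t n] by simp
    have "c * (Pq t 1 - Pqs t 1) \<le> Pq t 1 - Pqs t 1" using c d[of 1] by (simp add: mult_left_le_one_le)
    also have "\<dots> \<le> (\<Sum>n\<in>{1..N}. Pq t n - Pqs t n)"
      by (rule member_le_sum[where f="\<lambda>n. Pq t n - Pqs t n"]) (use N d in auto)
    finally have EY0: "0 \<le> measure_pmf.expectation (S t) ?Y" unfolding EY by (simp add: algebra_simps)
    have pw: "?Y st - real t * of_bool (N < snd (snd st)) \<le> ?X st" if st: "st \<in> set_pmf (S t)" for st
    proof -
      obtain h q qs where ste: "st = (h, q, qs)" by (cases st) auto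
      have qd: "\<bar>int q - int qs\<bar> \<le> int t" using sys_supp[OF st] ste by auto
      have "(\<Sum>n\<in>{1..N}. of_bool (n \<le> q) - of_bool (n \<le> qs) :: real) = real (min q N) - real (min qs N)"
        by (simp add: min_sum sum_subtractf)
      moreover have "(1 \<le> qs) = (qs \<noteq> 0)" "(1 \<le> q) = (q \<noteq> 0)" by auto
      moreover have "real (min q N) - real (min qs N) - real t * of_bool (N < qs) \<le> real q - real qs"
      proof (cases "N < qs")
        case True
        then show ?thesis using qd by (cases "q \<le> N") (auto simp: min_def)
      next
        case False
        then show ?thesis by (auto simp: min_def)
      qed
      ultimately show ?thesis unfolding ste by (auto simp: algebra_simps of_bool_def)
    qed
    have "measure_pmf.expectation (S t) ?Y - real t * ?P N =
          measure_pmf.expectation (S t) (\<lambda>st. ?Y st - real t * of_bool (N < snd (snd st)))"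
    proof -
      have "measure_pmf.expectation (S t) (\<lambda>st. of_bool (N < snd (snd st))) = ?P N"
      proof -
        have "(\<lambda>st. of_bool (N < snd (snd st)) :: real) = indicator {st. N < snd (snd st)}"
          by (auto simp: indicator_def)
        moreover have "measure_pmf.expectation (S t) (indicator {st. N < snd (snd st)}) = ?P N"
          by simp
        ultimately show ?thesis by metis
      qed
      thus ?thesis using intY
        by (simp add: Bochner_Integration.integral_diff ind_integrable)
    qed
    also have "\<dots> \<le> ?EX"
    proof (rule integral_mono_AE)
      show "integrable (measure_pmf (S t)) (\<lambda>st. ?Y st - real t * of_bool (N < snd (snd st)))"
        using intY by (intro Bochner_Integration.integrable_diff integrable_mult_right ind_integrable)
      show "integrable (measure_pmf (S t)) ?X"
      proof (rule integrable_supp_bnd[where B="t + 2"])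
        fix st assume "st \<in> set_pmf (S t)"
        from sys_supp[OF this] have "\<bar>real (fst (snd st)) - real (snd (snd st))\<bar> \<le> t" by linarith
        moreover have "\<bar>c * (of_bool (fst (snd st) = 0) - of_bool (snd (snd st) = 0))\<bar> \<le> 2"
          using c by (auto simp: of_bool_def)
        ultimately show "\<bar>?X st\<bar> \<le> t + 2" by linarith
      qed
      show "AE st in measure_pmf (S t). ?Y st - real t * of_bool (N < snd (snd st)) \<le> ?X st"
        using pw by (simp add: AE_measure_pmf_iff)
    qed
    finally show ?thesis using EY0 by linarith
  qed
  have lim: "(\<lambda>N. ?EX + real t * ?P N) \<longlonglongrightarrow> ?EX + real t * 0"
    by (intro tendsto_intros tail_to_0)
  show ?thesis
    using LIMSEQ_le_const[OF lim[simplified], of 0] bound by auto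
qed

end

context QB begin

definition mubar :: "hist \<Rightarrow> real" where
  "mubar h = (\<Sum>\<kappa>\<in>set_pmf (pol h). pmf (pol h) \<kappa> * mu \<kappa>)"

lemma mubar_le: "mubar h \<le> mu ks"
proof -
  have "mubar h \<le> (\<Sum>\<kappa>\<in>set_pmf (pol h). pmf (pol h) \<kappa> * mu ks)"
    unfolding mubar_def by (intro sum_mono mult_left_mono mu_le) (auto dest: pol_in)
  thus ?thesis by (simp add: sum_distrib_right[symmetric] pol_sum1)
qed

lemma mubar_ge: "0 \<le> mubar h"
  unfolding mubar_def by (intro sum_nonneg mult_nonneg_nonneg) (auto dest!: pol_in dest: mu01)

lemma gap_le: "\<kappa> \<in> {1..K} \<Longrightarrow> \<kappa> \<noteq> ks \<Longrightarrow> gap K mu \<le> mu ks - mu \<kappa>"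
  unfolding gap_def mu_star_def by (auto intro!: Max_ge)

lemma mubar_gap: "gap K mu * (1 - pmf (pol h) ks) \<le> mu ks - mubar h"
proof -
  have "gap K mu * (1 - pmf (pol h) ks) = (\<Sum>\<kappa>\<in>set_pmf (pol h). pmf (pol h) \<kappa> * (gap K mu * of_bool (\<kappa> \<noteq> ks)))"
  proof -
    have "(\<Sum>\<kappa>\<in>set_pmf (pol h). pmf (pol h) \<kappa> * (1 - of_bool (\<kappa> = ks))) = 1 - pmf (pol h) ks"
      using pol_sum_ind[of h "1" ks] pol_sum1[of h]
      by (simp add: algebra_simps sum_subtractf sum.distrib)
    moreover have "\<And>\<kappa>. (of_bool (\<kappa> \<noteq> ks) :: real) = 1 - of_bool (\<kappa> = ks)" by simp
    ultimately have "(\<Sum>\<kappa>\<in>set_pmf (pol h). pmf (pol h) \<kappa> * of_bool (\<kappa> \<noteq> ks)) = 1 - pmf (pol h) ks"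
      by presburger
    moreover have "(\<Sum>\<kappa>\<in>set_pmf (pol h). pmf (pol h) \<kappa> * (gap K mu * of_bool (\<kappa> \<noteq> ks))) =
        gap K mu * (\<Sum>\<kappa>\<in>set_pmf (pol h). pmf (pol h) \<kappa> * of_bool (\<kappa> \<noteq> ks))"
      by (simp add: sum_distrib_left algebra_simps)
    ultimately show ?thesis by simp
  qed
  also have "\<dots> \<le> (\<Sum>\<kappa>\<in>set_pmf (pol h). pmf (pol h) \<kappa> * (mu ks - mu \<kappa>))"
  proof (intro sum_mono mult_left_mono)
    fix \<kappa> assume "\<kappa> \<in> set_pmf (pol h)"
    hence k: "\<kappa> \<in> {1..K}" by (rule pol_in)
    show "gap K mu * of_bool (\<kappa> \<noteq> ks) \<le> mu ks - mu \<kappa>"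
      using gap_le[OF k] mu_le[OF k] by auto
  qed auto
  also have "\<dots> = mu ks - mubar h"
    unfolding mubar_def by (simp add: algebra_simps sum_subtractf sum_distrib_right[symmetric] pol_sum1)
  finally show ?thesis .
qed

lemma step_q_real: "measure_pmf.expectation (sys_step K lam mu pol (h, q, qs)) (\<lambda>y. real (fst (snd y))) =
   real q + lam - mubar h + (1 - lam) * mubar h * of_bool (q = 0)"
proof -
  have e: "lam * (mu \<kappa> * real q + (1 - mu \<kappa>) * real (q + 1)) + (1 - lam) * (mu \<kappa> * real (q - 1) + (1 - mu \<kappa>) * real q)
     = real q + lam + (- mu \<kappa> + ((1 - lam) * of_bool (q = 0)) * mu \<kappa>)" for \<kappa>
    by (cases "q = 0") (auto simp: algebra_simps of_nat_diff)
  have s: "(\<Sum>\<kappa>\<in>set_pmf (pol h). pmf (pol h) \<kappa> * (A + (- mu \<kappa> + B * mu \<kappa>))) =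
     A * (\<Sum>\<kappa>\<in>set_pmf (pol h). pmf (pol h) \<kappa>) + (B - 1) * (\<Sum>\<kappa>\<in>set_pmf (pol h). pmf (pol h) \<kappa> * mu \<kappa>)" for A B
    by (simp add: algebra_simps sum.distrib sum_distrib_left sum_subtractf)
  show ?thesis
    unfolding step_exp_q[of h q qs real] e mubar_def s pol_sum1 by (simp add: algebra_simps)
qed

lemma cmu: "0 \<le> (1 - lam) * mu ks" "(1 - lam) * mu ks \<le> 1"
  using lam_ge lam_le1 mu01[OF ks_in] by (auto intro: mult_le_one)

lemma step_qs_real: "measure_pmf.expectation (sys_step K lam mu pol (h, q, qs)) (\<lambda>y. real (snd (snd y))) =
   real qs + lam - mu ks + (1 - lam) * mu ks * of_bool (qs = 0)"
  unfolding step_exp_qs[of h q qs real] by (cases "qs = 0") (auto simp: algebra_simps of_nat_diff)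

lemma step_diff: "measure_pmf.expectation (sys_step K lam mu pol (h, q, qs)) (\<lambda>y. real (fst (snd y)) - real (snd (snd y))) =
   (real q + lam - mubar h + (1 - lam) * mubar h * of_bool (q = 0)) -
   (real qs + lam - mu ks + (1 - lam) * mu ks * of_bool (qs = 0))"
proof -
  have "measure_pmf.expectation (sys_step K lam mu pol (h, q, qs)) (\<lambda>y. real (fst (snd y)) - real (snd (snd y))) =
    measure_pmf.expectation (sys_step K lam mu pol (h, q, qs)) (\<lambda>y. real (fst (snd y))) -
    measure_pmf.expectation (sys_step K lam mu pol (h, q, qs)) (\<lambda>y. real (snd (snd y)))"
  proof (rule Bochner_Integration.integral_diff)
    show "integrable (measure_pmf (sys_step K lam mu pol (h, q, qs))) (\<lambda>y. real (fst (snd y)))"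
      by (rule integrable_supp_bnd[where B="q+1"]) (auto dest!: step_supp)
    show "integrable (measure_pmf (sys_step K lam mu pol (h, q, qs))) (\<lambda>y. real (snd (snd y)))"
      by (rule integrable_supp_bnd[where B="qs+1"]) (auto dest!: step_supp)
  qed
  thus ?thesis by (simp add: step_q_real step_qs_real)
qed

lemma psi_lb: "lam * gap K mu * (1 - pk ks t) \<le> queue_regret K lam mu pol (Suc t)"
proof -
  let ?X = "\<lambda>st. real (fst (snd st)) - real (snd (snd st)) +
           ((1 - lam) * mu ks) * (of_bool (fst (snd st) = 0) - of_bool (snd (snd st) = 0))"
  let ?Z = "\<lambda>st. ?X st + (mu ks - mubar (fst st)) * (1 - (1 - lam) * of_bool (fst (snd st) = 0))"
  have "queue_regret K lam mu pol (Suc t) =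
     measure_pmf.expectation (S (Suc t)) (\<lambda>st. real (fst (snd st)) - real (snd (snd st)))"
    unfolding queue_regret_def by (simp add: case_prod_unfold)
  also have "\<dots> = measure_pmf.expectation (S t)
     (\<lambda>st. measure_pmf.expectation (sys_step K lam mu pol st) (\<lambda>y. real (fst (snd y)) - real (snd (snd y))))"
  proof (rule sys_exp_Suc[where B="Suc t"])
    fix st assume "st \<in> set_pmf (S (Suc t))"
    from sys_supp[OF this] show "\<bar>real (fst (snd st)) - real (snd (snd st))\<bar> \<le> real (Suc t)" by linarith
  qed
  also have "\<dots> = measure_pmf.expectation (S t) ?Z"
  proof (rule Bochner_Integration.integral_cong[OF refl])
    fix st :: "hist \<times> nat \<times> nat"
    obtain h q qs where st: "st = (h, q, qs)" by (cases st) auto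
    show "measure_pmf.expectation (sys_step K lam mu pol st) (\<lambda>y. real (fst (snd y)) - real (snd (snd y))) = ?Z st"
      unfolding st step_diff by (simp add: algebra_simps)
  qed
  also have "\<dots> \<ge> measure_pmf.expectation (S t) (\<lambda>st. ?X st + lam * gap K mu * (1 - pmf (pol (fst st)) ks))"
  proof (rule integral_mono)
    have intX: "integrable (measure_pmf (S t)) ?X"
    proof (rule integrable_supp_bnd[where B="t + 2"])
      fix st assume "st \<in> set_pmf (S t)"
      from sys_supp[OF this] have "\<bar>real (fst (snd st)) - real (snd (snd st))\<bar> \<le> t" by linarith
      moreover have "\<bar>((1 - lam) * mu ks) * (of_bool (fst (snd st) = 0) - of_bool (snd (snd st) = 0))\<bar> \<le> 2"
        using cmu by (auto simp: of_bool_def abs_mult)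
      ultimately show "\<bar>?X st\<bar> \<le> t + 2" by linarith
    qed
    show "integrable (measure_pmf (S t)) (\<lambda>st. ?X st + lam * gap K mu * (1 - pmf (pol (fst st)) ks))"
      by (rule Bochner_Integration.integrable_add[OF intX], intro integrable_mult_right Bochner_Integration.integrable_diff
            integrable_supp_bnd[where B=1]) (auto simp: pmf_le_1)
    show "integrable (measure_pmf (S t)) ?Z"
    proof (rule Bochner_Integration.integrable_add[OF intX])
      show "integrable (measure_pmf (S t)) (\<lambda>st. (mu ks - mubar (fst st)) * (1 - (1 - lam) * of_bool (fst (snd st) = 0)))"
      proof (rule integrable_supp_bnd[where B=1])
        fix st :: "hist \<times> nat \<times> nat"
        have a: "0 \<le> mu ks - mubar (fst st)" "mu ks - mubar (fst st) \<le> 1"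
          using mubar_le[of "fst st"] mubar_ge[of "fst st"] mu01[OF ks_in] by auto
        have b: "0 \<le> 1 - (1 - lam) * of_bool (fst (snd st) = 0)" "1 - (1 - lam) * of_bool (fst (snd st) = 0) \<le> 1"
          using lam_ge lam_le1 by auto
        show "\<bar>(mu ks - mubar (fst st)) * (1 - (1 - lam) * of_bool (fst (snd st) = 0))\<bar> \<le> 1"
          using a b by (simp add: abs_mult mult_le_one)
      qed
    qed
    fix st :: "hist \<times> nat \<times> nat"
    have a: "0 \<le> mu ks - mubar (fst st)" using mubar_le by auto
    have b: "lam \<le> 1 - (1 - lam) * of_bool (fst (snd st) = 0)" using lam_ge lam_le1 by auto
    have "lam * gap K mu * (1 - pmf (pol (fst st)) ks) \<le> lam * (mu ks - mubar (fst st))"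
      using mubar_gap[of "fst st"] lam_ge by (simp add: mult.assoc mult_left_mono)
    also have "\<dots> \<le> (mu ks - mubar (fst st)) * (1 - (1 - lam) * of_bool (fst (snd st) = 0))"
      using mult_left_mono[OF b a] by (simp add: mult.commute)
    finally show "?X st + lam * gap K mu * (1 - pmf (pol (fst st)) ks) \<le> ?Z st" by simp
  qed
  also have "measure_pmf.expectation (S t) (\<lambda>st. ?X st + lam * gap K mu * (1 - pmf (pol (fst st)) ks)) =
     measure_pmf.expectation (S t) ?X + lam * gap K mu * (1 - pk ks t)"
  proof -
    have intX: "integrable (measure_pmf (S t)) ?X"
    proof (rule integrable_supp_bnd[where B="t + 2"])
      fix st assume "st \<in> set_pmf (S t)"
      from sys_supp[OF this] have "\<bar>real (fst (snd st)) - real (snd (snd st))\<bar> \<le> t" by linarith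
      moreover have "\<bar>((1 - lam) * mu ks) * (of_bool (fst (snd st) = 0) - of_bool (snd (snd st) = 0))\<bar> \<le> 2"
        using cmu by (auto simp: of_bool_def abs_mult)
      ultimately show "\<bar>?X st\<bar> \<le> t + 2" by linarith
    qed
    have intp: "integrable (measure_pmf (S t)) (\<lambda>st. pmf (pol (fst st)) ks)"
      by (rule integrable_supp_bnd[where B=1]) (auto simp: pmf_le_1)
    show ?thesis unfolding pk_def
      using intX intp by (simp add: Bochner_Integration.integral_add Bochner_Integration.integral_diff)
  qed
  finally have "measure_pmf.expectation (S t) ?X + lam * gap K mu * (1 - pk ks t) \<le> queue_regret K lam mu pol (Suc t)" .
  moreover have "0 \<le> measure_pmf.expectation (S t) ?X"
    using key_nonneg[of "(1 - lam) * mu ks" t] cmu by blast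
  ultimately show ?thesis by linarith
qed

end

definition Fset :: "nat \<Rightarrow> nat \<Rightarrow> hist set" where
  "Fset K t = {h. set h \<subseteq> {1..K} \<times> UNIV \<and> length h = t}"

lemma Fset_fin: "finite (Fset K t)"
  unfolding Fset_def by (rule finite_lists_length_eq) auto

context QB begin

definition H :: "nat \<Rightarrow> hist pmf" where "H t = map_pmf fst (S t)"

lemma H_supp: "set_pmf (H t) \<subseteq> Fset K t"
proof
  fix h assume "h \<in> set_pmf (H t)"
  then obtain st where "st \<in> set_pmf (S t)" "h = fst st" unfolding H_def by auto
  with sys_supp[OF this(1)] show "h \<in> Fset K t" unfolding Fset_def by force
qed

lemma pmf_H: "pmf (H t) x = measure_pmf.expectation (S t) (\<lambda>st. of_bool (fst st = x))"
proof -
  have "(\<lambda>st. of_bool (fst st = x) :: real) = indicator (fst -` {x})"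
    by (auto simp: indicator_def)
  moreover have "measure_pmf.expectation (S t) (indicator (fst -` {x})) = pmf (H t) x"
    unfolding H_def pmf_map by simp
  ultimately show ?thesis by metis
qed

definition fac :: "nat \<Rightarrow> bool \<Rightarrow> bool \<Rightarrow> real" where
  "fac \<kappa> a s = (if a then lam else 1 - lam) * (if s then mu \<kappa> else 1 - mu \<kappa>)"

lemma pmf_H_snoc: "pmf (H (Suc t)) (h0 @ [(\<kappa>0, a0, s0)]) = pmf (H t) h0 * pmf (pol h0) \<kappa>0 * fac \<kappa>0 a0 s0"
proof -
  let ?x = "h0 @ [(\<kappa>0, a0, s0)]"
  have "pmf (H (Suc t)) ?x = measure_pmf.expectation (S t)
     (\<lambda>st. measure_pmf.expectation (sys_step K lam mu pol st) (\<lambda>y. of_bool (fst y = ?x)))"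
    unfolding pmf_H by (rule sys_exp_Suc[where B=1]) auto
  also have "\<dots> = measure_pmf.expectation (S t) (\<lambda>st. of_bool (fst st = h0) * (pmf (pol h0) \<kappa>0 * fac \<kappa>0 a0 s0))"
  proof (rule Bochner_Integration.integral_cong[OF refl])
    fix st :: "hist \<times> nat \<times> nat"
    obtain h q qs where st: "st = (h, q, qs)" by (cases st) auto
    have "measure_pmf.expectation (sys_step K lam mu pol (h, q, qs)) (\<lambda>y. of_bool (fst y = ?x)) =
      (\<Sum>\<kappa>\<in>set_pmf (pol h). pmf (pol h) \<kappa> * (of_bool (h = h0 \<and> \<kappa> = \<kappa>0) * fac \<kappa> a0 s0))"
      unfolding step_exp_h[of h q qs "\<lambda>h'. of_bool (h' = ?x)"]
      by (intro sum.cong refl) (auto simp: fac_def)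
    also have "\<dots> = of_bool (h = h0) * (pmf (pol h0) \<kappa>0 * fac \<kappa>0 a0 s0)"
    proof (cases "h = h0")
      case True
      have "(\<Sum>\<kappa>\<in>set_pmf (pol h0). pmf (pol h0) \<kappa> * (of_bool (\<kappa> = \<kappa>0) * fac \<kappa> a0 s0)) =
         (\<Sum>\<kappa>\<in>set_pmf (pol h0). if \<kappa> = \<kappa>0 then pmf (pol h0) \<kappa>0 * fac \<kappa>0 a0 s0 else 0)"
        by (rule sum.cong) auto
      also have "\<dots> = pmf (pol h0) \<kappa>0 * fac \<kappa>0 a0 s0" using pol_fin[of h0]
        by (simp add: sum.delta set_pmf_iff)
      finally show ?thesis using True by simp
    qed auto
    finally show "measure_pmf.expectation (sys_step K lam mu pol st) (\<lambda>y. of_bool (fst y = ?x)) =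
      of_bool (fst st = h0) * (pmf (pol h0) \<kappa>0 * fac \<kappa>0 a0 s0)" by (simp add: st)
  qed
  also have "\<dots> = pmf (H t) h0 * pmf (pol h0) \<kappa>0 * fac \<kappa>0 a0 s0"
    unfolding pmf_H by simp
  finally show ?thesis .
qed

lemma H0: "H 0 = return_pmf []"
  unfolding H_def by (simp add: pmf.map_comp o_def)

lemma pmf_H_len: "length h \<noteq> t \<Longrightarrow> pmf (H t) h = 0"
  using H_supp[of t] unfolding Fset_def by (auto simp: set_pmf_iff)

end

lemma block_ineq:
  fixes P Q L :: "'a \<Rightarrow> real"
  assumes fin: "finite B"
    and nn: "\<And>h. h \<in> B \<Longrightarrow> 0 \<le> P h \<and> 0 \<le> Q h"
    and ac: "\<And>h. h \<in> B \<Longrightarrow> 0 < P h \<Longrightarrow> 0 < Q h \<and> L h = ln (P h / Q h)"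
    and PB: "0 < sum P B"
  shows "sum P B * ln (sum P B / sum Q B) \<le> (\<Sum>h\<in>B. P h * L h)"
proof -
  let ?PB = "sum P B" and ?QB = "sum Q B"
  obtain h0 where h0: "h0 \<in> B" "0 < P h0"
  proof (rule ccontr)
    assume "\<not> thesis"
    hence "\<forall>h\<in>B. P h \<le> 0" using that by force
    hence "?PB \<le> 0" by (intro sum_nonpos) auto
    with PB show False by simp
  qed
  have QB: "0 < ?QB"
  proof -
    have "Q h0 \<le> ?QB" by (rule member_le_sum) (use h0 nn fin in auto)
    with ac[OF h0] show ?thesis by simp
  qed
  have pw: "P h * ln (?PB / ?QB) - P h * L h \<le> Q h * (?PB / ?QB) - P h" if h: "h \<in> B" for h
  proof (cases "P h = 0")
    case True
    then show ?thesis using nn[OF h] PB QB by simp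
  next
    case False
    hence Ph: "0 < P h" using nn[OF h] by simp
    from ac[OF h Ph] have Qh: "0 < Q h" and Lh: "L h = ln (P h / Q h)" by auto
    have pos: "0 < (Q h * ?PB) / (P h * ?QB)" using Ph Qh PB QB by simp
    have "ln ((Q h * ?PB) / (P h * ?QB)) \<le> (Q h * ?PB) / (P h * ?QB) - 1"
      by (rule ln_le_minus_one[OF pos])
    moreover have "ln ((Q h * ?PB) / (P h * ?QB)) = ln (?PB / ?QB) - L h"
      unfolding Lh using Ph Qh PB QB by (simp add: ln_div ln_mult)
    ultimately have "ln (?PB / ?QB) - L h \<le> (Q h * ?PB) / (P h * ?QB) - 1" by simp
    hence "P h * (ln (?PB / ?QB) - L h) \<le> P h * ((Q h * ?PB) / (P h * ?QB) - 1)"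
      using Ph by (intro mult_left_mono) auto
    also have "\<dots> = Q h * (?PB / ?QB) - P h" using Ph by (simp add: field_simps)
    finally show ?thesis by (simp add: algebra_simps)
  qed
  have "(\<Sum>h\<in>B. P h * ln (?PB / ?QB) - P h * L h) \<le> (\<Sum>h\<in>B. Q h * (?PB / ?QB) - P h)"
    by (rule sum_mono) (rule pw)
  also have "\<dots> = (\<Sum>h\<in>B. Q h) * (?PB / ?QB) - ?PB" by (simp only: sum_subtractf sum_distrib_right)
  also have "\<dots> = 0" using QB by simp
  finally show ?thesis by (simp add: sum_subtractf sum_distrib_right[symmetric])
qed

lemma xlnx: "0 < (x::real) \<Longrightarrow> x \<le> 1 \<Longrightarrow> -1 \<le> x * ln x"
proof -
  assume x: "0 < x" "x \<le> 1"
  have "ln (1 / x) \<le> 1 / x - 1" using x by (intro ln_le_minus_one) auto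
  hence "- ln x \<le> 1 / x - 1" using x by (simp add: ln_div)
  hence "x * (- ln x) \<le> x * (1 / x - 1)" using x by (intro mult_left_mono) auto
  also have "\<dots> = 1 - x" using x by (simp add: field_simps)
  finally show ?thesis using x by simp
qed

lemma block_lb:
  fixes P Q L :: "'a \<Rightarrow> real"
  assumes fin: "finite B"
    and nn: "\<And>h. h \<in> B \<Longrightarrow> 0 \<le> P h \<and> 0 \<le> Q h"
    and ac: "\<And>h. h \<in> B \<Longrightarrow> 0 < P h \<Longrightarrow> 0 < Q h \<and> L h = ln (P h / Q h)"
    and P1: "sum P B \<le> 1"
  shows "sum P B * (- ln (sum Q B)) - 1 \<le> (\<Sum>h\<in>B. P h * L h)"
proof (cases "sum P B = 0")
  case True
  hence "\<forall>h\<in>B. P h = 0" using sum_nonneg_eq_0_iff[OF fin] nn by blast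
  then show ?thesis using True by simp
next
  case False
  hence PB: "0 < sum P B" using nn by (simp add: sum_nonneg order_le_neq_trans)
  obtain h0 where h0: "h0 \<in> B" "0 < P h0"
  proof (rule ccontr)
    assume "\<not> thesis"
    hence "\<forall>h\<in>B. P h \<le> 0" using that by force
    hence "sum P B \<le> 0" by (intro sum_nonpos) auto
    with PB show False by simp
  qed
  have QB: "0 < sum Q B"
  proof -
    have "Q h0 \<le> sum Q B" by (rule member_le_sum) (use h0 nn fin in auto)
    with ac[OF h0] show ?thesis by simp
  qed
  have "sum P B * (- ln (sum Q B)) - 1 \<le> sum P B * (- ln (sum Q B)) + sum P B * ln (sum P B)"
    using xlnx[OF PB P1] by simp
  also have "\<dots> = sum P B * ln (sum P B / sum Q B)" using PB QB by (simp add: ln_div algebra_simps)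
  also have "\<dots> \<le> (\<Sum>h\<in>B. P h * L h)" by (rule block_ineq[OF fin nn ac PB]) auto
  finally show ?thesis .
qed

lemma logsum_event:
  fixes P Q L :: "'a \<Rightarrow> real"
  assumes fin: "finite F" and AF: "A \<subseteq> F"
    and nn: "\<And>h. h \<in> F \<Longrightarrow> 0 \<le> P h \<and> 0 \<le> Q h"
    and ac: "\<And>h. h \<in> F \<Longrightarrow> 0 < P h \<Longrightarrow> 0 < Q h \<and> L h = ln (P h / Q h)"
    and P1: "sum P F = 1" and Q1: "sum Q F = 1"
  shows "sum P A * (- ln (sum Q A)) - 2 \<le> (\<Sum>h\<in>F. P h * L h)"
proof -
  have finA: "finite A" using fin AF finite_subset by blast
  have finB: "finite (F - A)" using fin by simp
  have split: "sum f F = sum f A + sum f (F - A)" for f :: "'a \<Rightarrow> real"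
    using sum.subset_diff[OF AF fin] by (simp add: add.commute)
  have PA0: "0 \<le> sum P A" "0 \<le> sum P (F - A)" using nn AF by (auto intro!: sum_nonneg)
  have PA1: "sum P A \<le> 1" and PB1: "sum P (F - A) \<le> 1"
    using split[of P] P1 PA0 by auto
  have QA0: "0 \<le> sum Q A" using nn AF by (auto intro!: sum_nonneg)
  have QB1: "sum Q (F - A) \<le> 1" using split[of Q] Q1 QA0 by auto
  have a: "sum P A * (- ln (sum Q A)) - 1 \<le> (\<Sum>h\<in>A. P h * L h)"
    by (rule block_lb[OF finA]) (use nn ac AF PA1 in auto)
  have b: "sum P (F - A) * (- ln (sum Q (F - A))) - 1 \<le> (\<Sum>h\<in>F - A. P h * L h)"
    by (rule block_lb[OF finB]) (use nn ac PB1 in auto)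
  have c: "0 \<le> sum P (F - A) * (- ln (sum Q (F - A)))"
  proof (cases "sum Q (F - A) = 0")
    case True then show ?thesis by simp
  next
    case False
    moreover have "0 \<le> sum Q (F - A)" using nn by (auto intro!: sum_nonneg)
    ultimately have "0 < sum Q (F - A)" by simp
    hence "ln (sum Q (F - A)) \<le> 0" using QB1 by simp
    thus ?thesis using nn by (intro mult_nonneg_nonneg sum_nonneg) auto
  qed
  show ?thesis using a b c split[of "\<lambda>h. P h * L h"] by linarith
qed


lemma KL_nonneg:
  assumes "0 \<le> p" "p < 1" "0 < p'" "p' < 1"
  shows "0 \<le> bern_KL p p'"
proof (cases "p = 0")
  case True
  have "1 \<le> 1 / (1 - p')" using assms by simp
  hence "0 \<le> ln (1 / (1 - p'))" by simp
  then show ?thesis using True unfolding bern_KL_def by simp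
next
  case False
  hence p: "0 < p" using assms by simp
  have a: "ln (p' / p) \<le> p' / p - 1" using p assms by (intro ln_le_minus_one) auto
  have b: "ln ((1 - p') / (1 - p)) \<le> (1 - p') / (1 - p) - 1" using assms by (intro ln_le_minus_one) auto
  have "p * ln (p' / p) + (1 - p) * ln ((1 - p') / (1 - p)) \<le> p * (p' / p - 1) + (1 - p) * ((1 - p') / (1 - p) - 1)"
    using a b p assms by (intro add_mono mult_left_mono) auto
  also have "\<dots> = 0" using p assms by (simp add: field_simps)
  finally have "p * ln (p' / p) + (1 - p) * ln ((1 - p') / (1 - p)) \<le> 0" .
  moreover have "ln (p / p') = - ln (p' / p)" "ln ((1 - p) / (1 - p')) = - ln ((1 - p') / (1 - p))"
    using p assms by (simp_all add: ln_div)
  ultimately show ?thesis unfolding bern_KL_def by simp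
qed

lemma KL_mono:
  assumes "0 \<le> p" "p \<le> p'" "p' \<le> q" "0 < q" "q < 1"
  shows "bern_KL p' q \<le> bern_KL p q"
proof (cases "p' = 0")
  case True
  then show ?thesis using assms by simp
next
  case False
  hence p': "0 < p'" using assms by simp
  have id1: "p * ln (p / q) = p * ln (p / p') + p * ln (p' / q)"
  proof (cases "p = 0")
    case False
    hence "0 < p" using assms by simp
    thus ?thesis using p' assms by (simp add: ln_div algebra_simps)
  qed simp
  have id2: "(1 - p) * ln ((1 - p) / (1 - q)) = (1 - p) * ln ((1 - p) / (1 - p')) + (1 - p) * ln ((1 - p') / (1 - q))"
    using assms p' by (simp add: ln_div algebra_simps)
  have "bern_KL p q - bern_KL p' q = bern_KL p p' + (p - p') * (ln (p' / q) - ln ((1 - p') / (1 - q)))"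
    unfolding bern_KL_def id1 id2 by (simp add: algebra_simps)
  moreover have "0 \<le> bern_KL p p'" using assms p' by (intro KL_nonneg) auto
  moreover have "ln (p' / q) \<le> 0" using assms p' by simp
  moreover have "0 \<le> ln ((1 - p') / (1 - q))" using assms by simp
  moreover have "p - p' \<le> 0" using assms by simp
  ultimately have "0 \<le> bern_KL p q - bern_KL p' q"
    by (simp add: mult_nonpos_nonpos)
  thus ?thesis by simp
qed


context QB begin

lemma exp_fst: "measure_pmf.expectation (S t) (\<lambda>st. f (fst st)) = (\<Sum>h\<in>Fset K t. pmf (H t) h * f h)"
proof -
  have "measure_pmf.expectation (S t) (\<lambda>st. f (fst st)) = measure_pmf.expectation (H t) f"
    unfolding H_def by simp
  also have "\<dots> = (\<Sum>h\<in>Fset K t. f h * pmf (H t) h)"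
    by (rule integral_measure_pmf_real) (use H_supp[of t] Fset_fin in auto)
  finally show ?thesis by (simp add: mult.commute)
qed

lemma H_sum1: "(\<Sum>h\<in>Fset K t. pmf (H t) h) = 1"
  by (rule sum_pmf_eq_1) (use H_supp[of t] Fset_fin in auto)

lemma len_cnt: "set h \<subseteq> {1..K} \<times> UNIV \<Longrightarrow> real (length h) = (\<Sum>j\<in>{1..K}. cnt j h)"
proof (induction h)
  case Nil
  then show ?case by (simp add: cnt_def)
next
  case (Cons e h)
  have "(\<Sum>j\<in>{1..K}. cnt j (e # h)) = (\<Sum>j\<in>{1..K}. cnt j h + of_bool (fst e = j))"
    by (intro sum.cong) (auto simp: cnt_def)
  also have "\<dots> = (\<Sum>j\<in>{1..K}. cnt j h) + 1"
    using Cons.prems by (auto simp: sum.distrib sum.delta)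
  finally show ?case using Cons by simp
qed

lemma pol_sum_ind2: "(\<Sum>\<kappa>\<in>set_pmf (pol h). pmf (pol h) \<kappa> * (c + of_bool (\<kappa> = k) * d)) = c + pmf (pol h) k * d"
proof -
  have "(\<Sum>\<kappa>\<in>set_pmf (pol h). pmf (pol h) \<kappa> * (c + of_bool (\<kappa> = k) * d)) =
     c * (\<Sum>\<kappa>\<in>set_pmf (pol h). pmf (pol h) \<kappa>) + d * (\<Sum>\<kappa>\<in>set_pmf (pol h). pmf (pol h) \<kappa> * of_bool (\<kappa> = k))"
    by (simp add: algebra_simps sum.distrib sum_distrib_left)
  also have "(\<Sum>\<kappa>\<in>set_pmf (pol h). pmf (pol h) \<kappa> * of_bool (\<kappa> = k)) = pmf (pol h) k"
    using pol_fin[of h] by (cases "k \<in> set_pmf (pol h)") (auto simp: set_pmf_iff)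
  finally show ?thesis by (simp add: pol_sum1 mult.commute)
qed

end

lemma ln_prod_list: fixes f :: "'a \<Rightarrow> real" shows "(\<forall>x\<in>set xs. 0 \<le> f x) \<Longrightarrow> 0 < prod_list (map f xs) \<Longrightarrow>
   (\<forall>x\<in>set xs. 0 < f x) \<and> ln (prod_list (map f xs)) = sum_list (map (\<lambda>x. ln (f x)) xs)"
proof (induction xs)
  case Nil
  then show ?case by simp
next
  case (Cons x xs)
  have fx: "0 \<le> f x" using Cons.prems by auto
  have r: "0 \<le> prod_list (map f xs)" by (rule prod_list_nonneg) (use Cons.prems in force)
  have "0 < f x" "0 < prod_list (map f xs)" using Cons.prems(2) fx r
    by (auto simp: zero_less_mult_iff)
  with Cons.IH Cons.prems show ?case by (simp add: ln_mult)
qed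

locale LR = QB +
  fixes k :: nat
  assumes k_in: "k \<in> {1..K}" and k_ne: "k \<noteq> best K mu" and ms1: "mu (best K mu) < 1"
begin

abbreviation "qq \<equiv> (mu ks + 1) / 2"

lemma qq: "mu ks < qq" "qq < 1" "0 < qq"
  using ms1 mu01[OF ks_in] by auto

lemma best': "is_best K (mu(k := qq)) k"
  unfolding is_best_def
proof (intro conjI ballI impI)
  fix j assume j: "j \<in> {1..K}" "j \<noteq> k"
  have "mu j \<le> mu ks" by (rule mu_le[OF j(1)])
  thus "(mu(k := qq)) j < (mu(k := qq)) k" using j qq by simp
qed (use k_in in auto)

lemma inst': "qb_instance K lam (mu(k := qq))"
  unfolding qb_instance_def using best' best_is_best[OF best'] lam_ge lam_lt qq mu01
  by auto

sublocale Q': QB K lam "mu(k := qq)" pol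
  by unfold_locales (rule inst', rule vp)

lemma ks': "best K (mu(k := qq)) = k" by (rule best_is_best[OF best'])

definition r :: "nat \<times> bool \<times> bool \<Rightarrow> real" where
  "r e = (if fst e = k then (if snd (snd e) then mu k / qq else (1 - mu k) / (1 - qq)) else 1)"

lemma r_nn: "0 \<le> r e"
  unfolding r_def using qq mu01[OF k_in] by auto

lemma fac_r: "fac \<kappa> a s = r (\<kappa>, a, s) * Q'.fac \<kappa> a s"
  unfolding fac_def Q'.fac_def r_def using qq by auto

lemma ratio: "pmf (H t) h = prod_list (map r h) * pmf (Q'.H t) h"
proof (induction t arbitrary: h)
  case 0
  show ?case unfolding H0 Q'.H0 by (cases "h = []") (auto simp: indicator_def)
next
  case (Suc t)
  show ?case
  proof (cases h rule: rev_cases)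
    case Nil
    have a: "pmf (H (Suc t)) [] = 0" by (rule pmf_H_len) simp
    have b: "pmf (Q'.H (Suc t)) [] = 0" by (rule Q'.pmf_H_len) simp
    show ?thesis unfolding Nil a b by (simp only: mult_zero_right)
  next
    case (snoc h0 e)
    obtain \<kappa> a s where e: "e = (\<kappa>, a, s)" by (cases e) auto
    show ?thesis unfolding snoc e pmf_H_snoc Q'.pmf_H_snoc Suc.IH fac_r by simp
  qed
qed

definition LL :: "hist \<Rightarrow> real" where "LL h = sum_list (map (\<lambda>e. ln (r e)) h)"

lemma ac: "0 < pmf (H t) h \<Longrightarrow> 0 < pmf (Q'.H t) h \<and> LL h = ln (pmf (H t) h / pmf (Q'.H t) h)"
proof -
  assume p: "0 < pmf (H t) h"
  have nn: "0 \<le> prod_list (map r h)" by (rule prod_list_nonneg) (auto simp: r_nn)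
  from p have "0 < prod_list (map r h) * pmf (Q'.H t) h" unfolding ratio .
  hence pr: "0 < prod_list (map r h)" and q: "0 < pmf (Q'.H t) h"
    using nn by (auto simp: zero_less_mult_iff)
  have "ln (prod_list (map r h)) = LL h"
    using ln_prod_list[of h r] pr r_nn unfolding LL_def by auto
  moreover have "pmf (H t) h / pmf (Q'.H t) h = prod_list (map r h)"
    using q unfolding ratio by simp
  ultimately show ?thesis using q by simp
qed

abbreviation "MM \<equiv> \<bar>ln (mu k / qq)\<bar> + \<bar>ln ((1 - mu k) / (1 - qq))\<bar>"

lemma lnr_bnd: "\<bar>ln (r e)\<bar> \<le> MM"
  unfolding r_def by auto

lemma LL_bnd: "\<bar>LL h\<bar> \<le> length h * MM"
proof (induction h)
  case Nil
  then show ?case by (simp add: LL_def)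
next
  case (Cons e h)
  have "\<bar>LL (e # h)\<bar> \<le> \<bar>ln (r e)\<bar> + \<bar>LL h\<bar>" by (simp add: LL_def)
  also have "\<dots> \<le> MM + length h * MM" using lnr_bnd[of e] Cons.IH by linarith
  finally show ?case by (simp add: algebra_simps)
qed

lemma LL_snoc: "LL (h @ [e]) = LL h + ln (r e)" by (simp add: LL_def)

lemma EL: "measure_pmf.expectation (S t) (\<lambda>st. LL (fst st)) = bern_KL (mu k) qq * (\<Sum>s<t. pk k s)"
proof (induction t)
  case 0
  then show ?case by (simp add: LL_def)
next
  case (Suc t)
  have "measure_pmf.expectation (S (Suc t)) (\<lambda>st. LL (fst st)) =
     measure_pmf.expectation (S t) (\<lambda>st. measure_pmf.expectation (sys_step K lam mu pol st) (\<lambda>y. LL (fst y)))"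
  proof (rule sys_exp_Suc[where B="Suc t * MM"])
    fix st assume "st \<in> set_pmf (S (Suc t))"
    with sys_supp[OF this] LL_bnd[of "fst st"] show "\<bar>LL (fst st)\<bar> \<le> Suc t * MM" by simp
  qed
  also have "\<dots> = measure_pmf.expectation (S t) (\<lambda>st. LL (fst st) + pmf (pol (fst st)) k * bern_KL (mu k) qq)"
  proof (rule Bochner_Integration.integral_cong[OF refl])
    fix st :: "hist \<times> nat \<times> nat"
    obtain h q qs where st: "st = (h, q, qs)" by (cases st) auto
    have e: "lam * (mu \<kappa> * LL (h @ [(\<kappa>, True, True)]) + (1 - mu \<kappa>) * LL (h @ [(\<kappa>, True, False)])) +
        (1 - lam) * (mu \<kappa> * LL (h @ [(\<kappa>, False, True)]) + (1 - mu \<kappa>) * LL (h @ [(\<kappa>, False, False)]))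
       = LL h + of_bool (\<kappa> = k) * bern_KL (mu k) qq" for \<kappa>
      unfolding LL_snoc by (cases "\<kappa> = k") (auto simp: r_def bern_KL_def algebra_simps)
    show "measure_pmf.expectation (sys_step K lam mu pol st) (\<lambda>y. LL (fst y)) =
        LL (fst st) + pmf (pol (fst st)) k * bern_KL (mu k) qq"
      unfolding st step_exp_h e by (simp add: pol_sum_ind2)
  qed
  also have "\<dots> = measure_pmf.expectation (S t) (\<lambda>st. LL (fst st)) + pk k t * bern_KL (mu k) qq"
  proof -
    have i1: "integrable (measure_pmf (S t)) (\<lambda>st. LL (fst st))"
    proof (rule integrable_supp_bnd[where B="t * MM"])
      fix st assume "st \<in> set_pmf (S t)"
      with sys_supp[OF this] LL_bnd[of "fst st"] show "\<bar>LL (fst st)\<bar> \<le> t * MM" by simp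
    qed
    have i2: "integrable (measure_pmf (S t)) (\<lambda>st. pmf (pol (fst st)) k)"
      by (rule integrable_supp_bnd[where B=1]) (auto simp: pmf_le_1)
    show ?thesis unfolding pk_def using i1 i2 by simp
  qed
  finally show ?case using Suc.IH by (simp add: algebra_simps)
qed

lemma LR_point:
  assumes t: "0 < t" and a: "exp_pulls K lam mu pol k t \<le> real t / 4"
    and b: "(\<Sum>j\<in>{1..K}-{k}. exp_pulls K lam (mu(k:=qq)) pol j t) \<le> B" and B: "0 < B"
    and lnpos: "0 \<le> ln (real t / (2 * B))"
  shows "(1/2) * ln (real t / (2 * B)) - 2 \<le> bern_KL (mu k) qq * exp_pulls K lam mu pol k t"
proof -
  let ?F = "Fset K t" and ?P = "pmf (H t)" and ?Q = "pmf (Q'.H t)"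
  define A where "A = {h\<in>?F. cnt k h \<le> real t / 2}"
  have AF: "A \<subseteq> ?F" unfolding A_def by auto
  have finF: "finite ?F" by (rule Fset_fin)
  have finA: "finite A" using AF finF finite_subset by blast
  have split: "sum f ?F = sum f A + sum f (?F - A)" for f :: "hist \<Rightarrow> real"
    using sum.subset_diff[OF AF finF] by (simp add: add.commute)
  have EN: "exp_pulls K lam mu pol k t = (\<Sum>h\<in>?F. ?P h * cnt k h)"
    unfolding exp_pulls_eq exp_fst ..
  have KLEN: "bern_KL (mu k) qq * exp_pulls K lam mu pol k t = (\<Sum>h\<in>?F. ?P h * LL h)"
    unfolding pulls_sum EL[symmetric] exp_fst ..
  have main: "sum ?P A * (- ln (sum ?Q A)) - 2 \<le> (\<Sum>h\<in>?F. ?P h * LL h)"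
    by (rule logsum_event[OF finF AF]) (auto simp: ac H_sum1 Q'.H_sum1)
  have "sum ?P (?F - A) \<le> (\<Sum>h\<in>?F - A. ?P h * (cnt k h * (2 / real t)))"
  proof (rule sum_mono)
    fix h assume "h \<in> ?F - A"
    hence "1 \<le> cnt k h * (2 / real t)" unfolding A_def using t by (auto simp: field_simps)
    from mult_left_mono[OF this pmf_nonneg[of "H t" h]]
    show "?P h \<le> ?P h * (cnt k h * (2 / real t))" by simp
  qed
  also have "\<dots> \<le> (\<Sum>h\<in>?F. ?P h * (cnt k h * (2 / real t)))"
    by (rule sum_mono2[OF finF]) (use t cnt_le in auto)
  also have "\<dots> = 2 / real t * exp_pulls K lam mu pol k t"
    unfolding EN by (simp add: sum_distrib_left algebra_simps)
  also have "\<dots> \<le> 1 / 2" using a t by (simp add: field_simps)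
  finally have PFA: "sum ?P (?F - A) \<le> 1 / 2" .
  have PA: "1 / 2 \<le> sum ?P A" using split[of ?P] H_sum1[of t] PFA by simp
  have cntF: "real t - cnt k h = (\<Sum>j\<in>{1..K}-{k}. cnt j h)" if "h \<in> ?F" for h
  proof -
    have "real t = (\<Sum>j\<in>{1..K}. cnt j h)" using len_cnt[of h] that unfolding Fset_def by auto
    also have "\<dots> = cnt k h + (\<Sum>j\<in>{1..K}-{k}. cnt j h)"
      using k_in by (simp add: sum.remove)
    finally show ?thesis by simp
  qed
  have "sum ?Q A \<le> (\<Sum>h\<in>A. ?Q h * ((real t - cnt k h) * (2 / real t)))"
  proof (rule sum_mono)
    fix h assume "h \<in> A"
    hence "1 \<le> (real t - cnt k h) * (2 / real t)" unfolding A_def using t by (auto simp: field_simps)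
    from mult_left_mono[OF this pmf_nonneg[of "Q'.H t" h]]
    show "?Q h \<le> ?Q h * ((real t - cnt k h) * (2 / real t))" by simp
  qed
  also have "\<dots> \<le> (\<Sum>h\<in>?F. ?Q h * ((real t - cnt k h) * (2 / real t)))"
  proof (rule sum_mono2[OF finF AF])
    fix h assume "h \<in> ?F - A"
    hence "0 \<le> real t - cnt k h" using cntF[of h] by (auto intro!: sum_nonneg cnt_le)
    thus "0 \<le> ?Q h * ((real t - cnt k h) * (2 / real t))" by simp
  qed
  also have "\<dots> = (\<Sum>h\<in>?F. \<Sum>j\<in>{1..K}-{k}. 2 / real t * (?Q h * cnt j h))"
  proof (rule sum.cong[OF refl])
    fix h assume h: "h \<in> ?F"
    have "?Q h * ((real t - cnt k h) * (2 / real t)) = 2 / real t * (?Q h * (\<Sum>j\<in>{1..K}-{k}. cnt j h))"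
      unfolding cntF[OF h] by (simp add: algebra_simps)
    also have "\<dots> = (\<Sum>j\<in>{1..K}-{k}. 2 / real t * (?Q h * cnt j h))"
      by (simp add: sum_distrib_left)
    finally show "?Q h * ((real t - cnt k h) * (2 / real t)) = (\<Sum>j\<in>{1..K}-{k}. 2 / real t * (?Q h * cnt j h))" .
  qed
  also have "\<dots> = 2 / real t * (\<Sum>j\<in>{1..K}-{k}. \<Sum>h\<in>?F. ?Q h * cnt j h)"
    by (subst sum.swap) (simp add: sum_distrib_left)
  also have "(\<Sum>j\<in>{1..K}-{k}. \<Sum>h\<in>?F. ?Q h * cnt j h) = (\<Sum>j\<in>{1..K}-{k}. exp_pulls K lam (mu(k:=qq)) pol j t)"
    by (intro sum.cong refl) (simp add: Q'.exp_pulls_eq Q'.exp_fst)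
  also have "2 / real t * \<dots> \<le> 2 * B / real t" using b t by (simp add: field_simps)
  finally have QA: "sum ?Q A \<le> 2 * B / real t" .
  have QA0: "0 < sum ?Q A"
  proof -
    obtain h where h: "h \<in> A" "0 < ?P h"
    proof (rule ccontr)
      assume "\<not> thesis"
      hence "\<forall>h\<in>A. ?P h \<le> 0" using that by (meson leI)
      hence "sum ?P A \<le> 0" by (intro sum_nonpos) auto
      with PA show False by simp
    qed
    have "?Q h \<le> sum ?Q A" by (rule member_le_sum) (use h finA in auto)
    with ac[OF h(2)] show ?thesis by simp
  qed
  have "ln (real t / (2 * B)) \<le> - ln (sum ?Q A)"
  proof -
    have "ln (sum ?Q A) \<le> ln (2 * B / real t)" using QA QA0 by simp
    also have "\<dots> = - ln (real t / (2 * B))" using t B by (simp add: ln_div)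
    finally show ?thesis by simp
  qed
  hence "(1/2) * ln (real t / (2 * B)) \<le> sum ?P A * (- ln (sum ?Q A))"
    using PA lnpos by (intro mult_mono) auto
  with main KLEN show ?thesis by linarith
qed

end

lemma bigO_ev:
  fixes f :: "nat \<Rightarrow> real"
  assumes "f \<in> O(\<lambda>t. real t powr a)"
  shows "\<exists>c>0. eventually (\<lambda>t. f t \<le> c * real t powr a) sequentially"
  using assms
proof (elim landau_o.bigE)
  fix c :: real assume c: "0 < c" "eventually (\<lambda>t. norm (f t) \<le> c * norm (real t powr a)) at_top"
  have "eventually (\<lambda>t. f t \<le> c * real t powr a) sequentially"
    using c(2) by eventually_elim auto
  with c(1) show ?thesis by blast
qed

context LR begin

lemma LR_event:
  assumes a: "0 < \<alpha>" "\<alpha> < 1"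
    and C1: "eventually (\<lambda>t. exp_pulls K lam mu pol k t \<le> C1 * real t powr \<alpha>) sequentially"
    and C2: "eventually (\<lambda>t. (\<Sum>j\<in>{1..K}-{k}. exp_pulls K lam (mu(k:=qq)) pol j t) \<le> C2 * real t powr \<alpha>) sequentially"
    and C2p: "0 < C2"
  shows "eventually (\<lambda>t. (1 - \<alpha>) / 2 * ln (real t) - (ln (2 * C2) / 2 + 2) \<le>
           bern_KL (mu k) qq * exp_pulls K lam mu pol k t) sequentially"
proof -
  have e1: "eventually (\<lambda>t. C1 * real t powr \<alpha> \<le> real t / 4) sequentially"
    using a by real_asymp
  have e2: "eventually (\<lambda>t::nat. 0 \<le> (1 - \<alpha>) * ln (real t) - ln (2 * C2)) sequentially"
    using a by real_asymp
  have e3: "eventually (\<lambda>t::nat. 0 < t) sequentially"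
    by (simp add: eventually_gt_at_top)
  show ?thesis using C1 C2 e1 e2 e3
  proof eventually_elim
    case (elim t)
    have tp: "0 < real t" using elim by simp
    have B: "0 < C2 * real t powr \<alpha>" using C2p tp by simp
    have lneq: "ln (real t / (2 * (C2 * real t powr \<alpha>))) = (1 - \<alpha>) * ln (real t) - ln (2 * C2)"
      using tp C2p by (simp add: ln_div ln_mult ln_powr algebra_simps)
    have "(1/2) * ln (real t / (2 * (C2 * real t powr \<alpha>))) - 2 \<le> bern_KL (mu k) qq * exp_pulls K lam mu pol k t"
      by (rule LR_point[OF elim(5)]) (use elim B lneq in auto)
    thus ?case unfolding lneq by (simp add: algebra_simps)
  qed
qed

end

lemma harm_bound: "1 \<le> t \<Longrightarrow> (\<Sum>s<t. 1 / (real s + 1)) \<le> 1 + ln (real t)"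
proof (induction t rule: dec_induct)
  case base
  then show ?case by simp
next
  case (step n)
  have n: "1 \<le> real n" using step by simp
  have "1 / (real n + 1) \<le> ln (real n + 1) - ln (real n)"
  proof -
    have "ln (real n / (real n + 1)) \<le> real n / (real n + 1) - 1"
      using n by (intro ln_le_minus_one) auto
    also have "\<dots> = - (1 / (real n + 1))" using n by (simp add: field_simps)
    finally show ?thesis using n by (simp add: ln_div)
  qed
  then show ?case using step.IH by (simp add: add.commute)
qed

context QB begin

lemma pk_nn: "0 \<le> pk k t" unfolding pk_def by simp
lemma pk_le1: "pk k t \<le> 1"
proof -
  have "pk k t \<le> measure_pmf.expectation (S t) (\<lambda>_. 1::real)"
    unfolding pk_def by (rule integral_mono) (auto simp: pmf_le_1 intro: integrable_supp_bnd[where B=1])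
  thus ?thesis by simp
qed

lemma pulls_nn: "0 \<le> exp_pulls K lam mu pol k t"
  unfolding pulls_sum by (intro sum_nonneg pk_nn)

lemma pk_sum: "(\<Sum>k\<in>{1..K}. pk k s) = 1"
proof -
  have "(\<Sum>k\<in>{1..K}. pk k s) = measure_pmf.expectation (S s) (\<lambda>st. \<Sum>k\<in>{1..K}. pmf (pol (fst st)) k)"
    unfolding pk_def
    by (rule Bochner_Integration.integral_sum[symmetric]) (auto simp: pmf_le_1 intro: integrable_supp_bnd[where B=1])
  also have "\<dots> = measure_pmf.expectation (S s) (\<lambda>_. 1)"
    by (intro Bochner_Integration.integral_cong refl sum_pmf_eq_1) (auto dest: pol_in)
  finally show ?thesis by simp
qed

lemma U_eq: "(\<Sum>k\<in>{1..K}-{ks}. exp_pulls K lam mu pol k t) = (\<Sum>s<t. 1 - pk ks s)"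
proof -
  have "(\<Sum>k\<in>{1..K}-{ks}. exp_pulls K lam mu pol k t) = (\<Sum>s<t. \<Sum>k\<in>{1..K}-{ks}. pk k s)"
    unfolding pulls_sum by (rule sum.swap)
  also have "\<dots> = (\<Sum>s<t. 1 - pk ks s)"
  proof (rule sum.cong[OF refl])
    fix s
    have "(\<Sum>k\<in>{1..K}. pk k s) = pk ks s + (\<Sum>k\<in>{1..K}-{ks}. pk k s)"
      using ks_in by (simp add: sum.remove)
    thus "(\<Sum>k\<in>{1..K}-{ks}. pk k s) = 1 - pk ks s" using pk_sum[of s] by simp
  qed
  finally show ?thesis .
qed

lemma gap_pos: assumes "2 \<le> K" shows "0 < gap K mu"
proof -
  let ?A = "mu ` ({1..K} - {ks})"
  have ne: "?A \<noteq> {}"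
  proof (cases "ks = 1")
    case True
    hence "2 \<in> {1..K} - {ks}" using assms by auto
    thus ?thesis by blast
  next
    case False
    hence "1 \<in> {1..K} - {ks}" using assms by auto
    thus ?thesis by blast
  qed
  have "Max ?A \<in> ?A" by (rule Max_in) (use ne in auto)
  then obtain j where "j \<in> {1..K} - {ks}" "Max ?A = mu j" by blast
  with mu_lt[of j] show ?thesis unfolding gap_def mu_star_def by auto
qed

lemma mumin: "0 \<le> mu_min K mu" "k \<in> {1..K} \<Longrightarrow> mu_min K mu \<le> mu k"
proof -
  have "Min (mu ` {1..K}) \<in> mu ` {1..K}" by (rule Min_in) (use ks_in in auto)
  thus "0 \<le> mu_min K mu" unfolding mu_min_def using mu01 by auto
  show "k \<in> {1..K} \<Longrightarrow> mu_min K mu \<le> mu k" unfolding mu_min_def by (auto intro: Min_le)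
qed

end

context LR begin

lemma LR_final:
  assumes cons: "alpha_consistent K \<alpha> pol" and a: "0 < \<alpha>" "\<alpha> < 1"
  shows "\<exists>C. eventually (\<lambda>t. (1 - \<alpha>) / 2 * ln (real t) - C \<le> bern_KL (mu k) qq * exp_pulls K lam mu pol k t) sequentially"
proof -
  have O1: "(\<lambda>t. exp_pulls K lam mu pol k t) \<in> O(\<lambda>t. real t powr \<alpha>)"
    using cons inst k_in k_ne unfolding alpha_consistent_def by blast
  obtain C1 where C1: "eventually (\<lambda>t. exp_pulls K lam mu pol k t \<le> C1 * real t powr \<alpha>) sequentially"
    using bigO_ev[OF O1] by blast
  have ex: "\<forall>j\<in>{1..K}-{k}. \<exists>c>0. eventually (\<lambda>t. exp_pulls K lam (mu(k:=qq)) pol j t \<le> c * real t powr \<alpha>) sequentially"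
  proof
    fix j assume j: "j \<in> {1..K}-{k}"
    have "(\<lambda>t. exp_pulls K lam (mu(k:=qq)) pol j t) \<in> O(\<lambda>t. real t powr \<alpha>)"
      using cons inst' j ks' unfolding alpha_consistent_def by auto
    thus "\<exists>c>0. eventually (\<lambda>t. exp_pulls K lam (mu(k:=qq)) pol j t \<le> c * real t powr \<alpha>) sequentially"
      by (rule bigO_ev)
  qed
  obtain c where c: "\<forall>j\<in>{1..K}-{k}. c j > 0 \<and> eventually (\<lambda>t. exp_pulls K lam (mu(k:=qq)) pol j t \<le> c j * real t powr \<alpha>) sequentially"
    using bchoice[OF ex] by blast
  define C2 where "C2 = 1 + (\<Sum>j\<in>{1..K}-{k}. c j)"
  have "0 \<le> (\<Sum>j\<in>{1..K}-{k}. c j)"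
  proof (rule sum_nonneg)
    fix x assume "x \<in> {1..K}-{k}"
    with c have "0 < c x" by blast
    thus "0 \<le> c x" by simp
  qed
  hence C2p: "0 < C2" unfolding C2_def by simp
  have ev: "eventually (\<lambda>t. \<forall>j\<in>{1..K}-{k}. exp_pulls K lam (mu(k:=qq)) pol j t \<le> c j * real t powr \<alpha>) sequentially"
    using c by (intro eventually_ball_finite) auto
  have C2ev: "eventually (\<lambda>t. (\<Sum>j\<in>{1..K}-{k}. exp_pulls K lam (mu(k:=qq)) pol j t) \<le> C2 * real t powr \<alpha>) sequentially"
    using ev
  proof eventually_elim
    case (elim t)
    have "(\<Sum>j\<in>{1..K}-{k}. exp_pulls K lam (mu(k:=qq)) pol j t) \<le> (\<Sum>j\<in>{1..K}-{k}. c j * real t powr \<alpha>)"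
      using elim by (intro sum_mono) auto
    also have "\<dots> = (\<Sum>j\<in>{1..K}-{k}. c j) * real t powr \<alpha>" by (simp add: sum_distrib_right)
    also have "\<dots> \<le> C2 * real t powr \<alpha>" unfolding C2_def by (intro mult_right_mono) auto
    finally show ?case .
  qed
  show ?thesis using LR_event[OF a C1 C2ev C2p] by blast
qed

end


context QB begin

lemma lower_U:
  assumes cons: "alpha_consistent K \<alpha> pol" and a: "0 < \<alpha>" "\<alpha> < 1" and ms: "mu ks < 1"
  shows "\<exists>C. eventually (\<lambda>t. real (card ({1..K}-{ks})) * ((1 - \<alpha>) / 2 * ln (real t)) - C \<le>
      bern_KL (mu_min K mu) ((mu ks + 1) / 2) * (\<Sum>k\<in>{1..K}-{ks}. exp_pulls K lam mu pol k t)) sequentially"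
proof -
  let ?J = "{1..K}-{ks}" and ?KLm = "bern_KL (mu_min K mu) ((mu ks + 1) / 2)"
  have ex: "\<forall>k\<in>?J. \<exists>C. eventually (\<lambda>t. (1 - \<alpha>) / 2 * ln (real t) - C \<le> ?KLm * exp_pulls K lam mu pol k t) sequentially"
  proof
    fix k assume k: "k \<in> ?J"
    interpret L: LR K lam mu pol k by unfold_locales (use k ms in auto)
    obtain C where C: "eventually (\<lambda>t. (1 - \<alpha>) / 2 * ln (real t) - C \<le> bern_KL (mu k) L.qq * exp_pulls K lam mu pol k t) sequentially"
      using L.LR_final[OF cons a] by blast
    have kin: "k \<in> {1..K}" using k by simp
    have mono: "bern_KL (mu k) L.qq \<le> ?KLm"
      by (rule KL_mono) (use mumin(1) mumin(2)[OF kin] kin L.qq mu_le[OF kin] in auto)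
    show "\<exists>C. eventually (\<lambda>t. (1 - \<alpha>) / 2 * ln (real t) - C \<le> ?KLm * exp_pulls K lam mu pol k t) sequentially"
    proof (intro exI)
      show "eventually (\<lambda>t. (1 - \<alpha>) / 2 * ln (real t) - C \<le> ?KLm * exp_pulls K lam mu pol k t) sequentially"
        using C
      proof eventually_elim
        case (elim t)
        have "bern_KL (mu k) L.qq * exp_pulls K lam mu pol k t \<le> ?KLm * exp_pulls K lam mu pol k t"
          by (rule mult_right_mono[OF mono pulls_nn])
        with elim show ?case by linarith
      qed
    qed
  qed
  obtain C where C: "\<forall>k\<in>?J. eventually (\<lambda>t. (1 - \<alpha>) / 2 * ln (real t) - C k \<le> ?KLm * exp_pulls K lam mu pol k t) sequentially"
    using bchoice[OF ex] by blast
  have "eventually (\<lambda>t. \<forall>k\<in>?J. (1 - \<alpha>) / 2 * ln (real t) - C k \<le> ?KLm * exp_pulls K lam mu pol k t) sequentially"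
    using C by (intro eventually_ball_finite) auto
  hence "eventually (\<lambda>t. real (card ?J) * ((1 - \<alpha>) / 2 * ln (real t)) - (\<Sum>k\<in>?J. C k) \<le>
      ?KLm * (\<Sum>k\<in>?J. exp_pulls K lam mu pol k t)) sequentially"
  proof eventually_elim
    case (elim t)
    have "real (card ?J) * ((1 - \<alpha>) / 2 * ln (real t)) - (\<Sum>k\<in>?J. C k) = (\<Sum>k\<in>?J. (1 - \<alpha>) / 2 * ln (real t) - C k)"
      by (simp add: sum_subtractf)
    also have "\<dots> \<le> (\<Sum>k\<in>?J. ?KLm * exp_pulls K lam mu pol k t)"
      by (rule sum_mono) (use elim in blast)
    also have "\<dots> = ?KLm * (\<Sum>k\<in>?J. exp_pulls K lam mu pol k t)" by (simp add: sum_distrib_left)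
    finally show ?case .
  qed
  thus ?thesis by blast
qed

end


lemma sum_ind_min: "(\<Sum>s<t. of_bool (s < m) :: real) = real (min t m)"
  by (induction t) (auto simp: min_def)

theorem theorem1:
  fixes K :: nat and lam :: real and mu :: "nat \<Rightarrow> real"
    and \<alpha> :: real and pol :: policy
  assumes "K \<ge> 2"
    and "qb_instance K lam mu"
    and "0 < \<alpha>" and "\<alpha> < 1"
    and "valid_policy K pol"
    and "alpha_consistent K \<alpha> pol"
  shows "\<exists>\<^sub>\<infinity>t. queue_regret K lam mu pol t \<ge>
           (lam / 4 * D_mu K mu * (1 - \<alpha>) * (real K - 1)) / real t"
proof -
  interpret QB K lam mu pol by unfold_locales (rule assms)+
  define R where "R = lam / 4 * D_mu K mu * (1 - \<alpha>) * (real K - 1)"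
  have gp: "0 < gap K mu" by (rule gap_pos[OF assms(1)])
  have psinn: "0 \<le> queue_regret K lam mu pol (Suc t)" for t
  proof -
    have "0 \<le> lam * gap K mu * (1 - pk ks t)"
      using lam_ge gp pk_le1[of ks t] by (intro mult_nonneg_nonneg) auto
    with psi_lb[of t] show ?thesis by linarith
  qed
  show ?thesis
  proof (rule ccontr)
    assume "\<not> ?thesis"
    then obtain m where hm: "\<And>n. n > m \<Longrightarrow> queue_regret K lam mu pol n < R / real n"
      unfolding not_INFM MOST_nat R_def by (auto simp: not_le)
    show False
    proof (cases "R \<le> 0")
      case True
      have "R / real (Suc m) \<le> 0" using True by (simp add: divide_nonpos_pos)
      with hm[of "Suc m"] psinn[of m] show False by simp
    next
      case False
      hence Rp: "0 < R" by simp
      have Kp: "0 < real K - 1" using assms(1) by simp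
      have ap: "0 < 1 - \<alpha>" using assms(4) by simp
      have "R = (lam * D_mu K mu) * ((1 - \<alpha>) * (real K - 1) / 4)" unfolding R_def by (simp add: algebra_simps)
      moreover have pos: "0 < (1 - \<alpha>) * (real K - 1) / 4" using ap Kp by simp
      ultimately have lD: "0 < lam * D_mu K mu"
      proof -
        assume Req: "R = (lam * D_mu K mu) * ((1 - \<alpha>) * (real K - 1) / 4)"
        show ?thesis
        proof (rule ccontr)
          assume "\<not> 0 < lam * D_mu K mu"
          have "(lam * D_mu K mu) * ((1 - \<alpha>) * (real K - 1) / 4) \<le> 0"
            by (rule mult_nonpos_nonneg) (use pos \<open>\<not> 0 < lam * D_mu K mu\<close> in auto)
          with Req Rp show False by simp
        qed
      qed
      have lamp: "0 < lam" using lD lam_ge by (cases "lam = 0") auto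
      have Dp: "0 < D_mu K mu" using lD lamp by (simp add: zero_less_mult_iff)
      let ?q = "(mu ks + 1) / 2"
      let ?KLm = "bern_KL (mu_min K mu) ?q"
      have q1: "?q \<noteq> 1"
      proof
        assume "?q = 1"
        hence "D_mu K mu = 0" unfolding D_mu_def mu_star_def Let_def by simp
        with Dp show False by simp
      qed
      have ms: "mu ks < 1" using q1 mu01[OF ks_in] by auto
      have Deq: "D_mu K mu = gap K mu / ?KLm" unfolding D_mu_def mu_star_def Let_def using q1 by simp
      have KLp: "0 < ?KLm" using Dp gp unfolding Deq by (simp add: zero_less_divide_iff)
      define c where "c = (1 - \<alpha>) * (real K - 1) / (4 * ?KLm)"
      have cnn: "0 \<le> c" unfolding c_def using ap Kp KLp by simp
      have Rc: "R = lam * gap K mu * c" unfolding R_def c_def Deq using KLp by (simp add: field_simps)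
      have lg: "0 < lam * gap K mu" using lamp gp by simp
      have termb: "1 - pk ks s \<le> of_bool (s < m) + c / (real s + 1)" for s
      proof (cases "s < m")
        case True
        have "0 \<le> c / (real s + 1)" using cnn by simp
        then show ?thesis using True pk_nn[of ks s] by simp
      next
        case False
        hence "Suc s > m" by simp
        from hm[OF this] have "queue_regret K lam mu pol (Suc s) < lam * gap K mu * c / real (Suc s)"
          unfolding Rc .
        moreover have "lam * gap K mu * c / real (Suc s) = lam * gap K mu * (c / (real s + 1))"
          by (simp add: add.commute)
        ultimately have "lam * gap K mu * (1 - pk ks s) < lam * gap K mu * (c / (real s + 1))"
          using psi_lb[of s] by linarith
        hence "1 - pk ks s < c / (real s + 1)" using mult_less_cancel_left_pos[OF lg] by blast
        then show ?thesis using False by simp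
      qed
      have upper: "(\<Sum>s<t. 1 - pk ks s) \<le> real m + c * (1 + ln (real t))" if t: "1 \<le> t" for t
      proof -
        have "(\<Sum>s<t. 1 - pk ks s) \<le> (\<Sum>s<t. of_bool (s < m) + c / (real s + 1))"
          by (rule sum_mono) (rule termb)
        also have "\<dots> = real (min t m) + c * (\<Sum>s<t. 1 / (real s + 1))"
          by (simp add: sum.distrib sum_ind_min sum_distrib_left)
        also have "\<dots> \<le> real m + c * (1 + ln (real t))"
          using harm_bound[OF t] cnn by (intro add_mono mult_left_mono) auto
        finally show ?thesis .
      qed
      obtain C where C: "eventually (\<lambda>t. real (card ({1..K}-{ks})) * ((1 - \<alpha>) / 2 * ln (real t)) - C \<le>
          ?KLm * (\<Sum>k\<in>{1..K}-{ks}. exp_pulls K lam mu pol k t)) sequentially"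
        using lower_U[OF assms(6) assms(3) assms(4) ms] by blast
      have card: "real (card ({1..K}-{ks})) = real K - 1" using ks_in assms(1) by (simp add: of_nat_diff)
      define A where "A = (1 - \<alpha>) * (real K - 1) / 4"
      have Ap: "0 < A" unfolding A_def using ap Kp by simp
      define M where "M = (C + ?KLm * real m + A + 1) / A"
      have lnev: "eventually (\<lambda>t::nat. M \<le> ln (real t)) sequentially" by real_asymp
      have t1: "eventually (\<lambda>t::nat. 1 \<le> t) sequentially" by (simp add: eventually_ge_at_top)
      have "eventually (\<lambda>t::nat. False) sequentially"
        using C lnev t1
      proof eventually_elim
        case (elim t)
        have "2 * A * ln (real t) - C \<le> ?KLm * (\<Sum>s<t. 1 - pk ks s)"
          using elim(1) unfolding card U_eq A_def by (simp add: algebra_simps)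
        also have "\<dots> \<le> ?KLm * (real m + c * (1 + ln (real t)))"
          using upper[OF elim(3)] KLp by (intro mult_left_mono) auto
        also have "\<dots> = ?KLm * real m + A * (1 + ln (real t))"
          unfolding c_def A_def using KLp by (simp add: field_simps)
        finally have "A * ln (real t) \<le> C + ?KLm * real m + A" by (simp add: algebra_simps)
        moreover have "A * M \<le> A * ln (real t)" using elim(2) Ap by (intro mult_left_mono) auto
        moreover have "A * M = C + ?KLm * real m + A + 1" unfolding M_def using Ap by simp
        ultimately show False by linarith
      qed
      thus False by (simp add: eventually_sequentially)
    qed
  qed
qed


end
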